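(* The category $\mathcal M_{\max\star}(\mathbb S^{\mathrm{m},\mathbb P}_r)$ is a traced symmetric monoidal category.
   Context: Notation: $[k]=\{1,\dots,k\}$; $T(X)=X+\mathbb R\times X+\{\exists^*,\forall^*\}$; diagrammatic composition. $\mathbb S^{\mathrm{m},\mathbb P}_r$: objects natural numbers; arrows $f:m\to n$ are functions $[m]\to T([n])$ such that for all $i\ne j$, $f(i)\notin[n]$ or $f(j)\notin\{f(i)\}\cup\mathbb R\times\{f(i)\}$; each hom-set is ordered pointwise by the least order on $T([n])$ with $(r_1,i)\le(r_2,i)$ if $r_1\ge r_2$, $\exists^*\le z$, $z\le\forall^*$. Operations: $(f;g)(i)=f(i)$ if $f(i)\in\{\exists^*,\forall^*\}$; $g(j)$ if $f(i)=j$; $g(j)$ if $f(i)=(r,j)$, $g(j)\in\{\exists^*,\forall^*\}$; $(r,k)$ if $f(i)=(r,j)$, $g(j)=k$; $(r+r',k)$ if $f(i)=(r,j)$, $g(j)=(r',k)$. $\mathrm{id}(i)=i$; $\sigma_{m,n}(i)=n+i$ ($i\le m$), $\sigma_{m,n}(m+j)=j$; $(f\oplus g)(i)=f(i)$ ($i\le m$), $(f\oplus g)(m+i)$ is $g(i)$ with its index $j$ (if any) shifted to $n+j$. Trace of $f:l+m\to l+n$ at $i\in[m]$: $v_0=l+i$; if $j=0$ or $v_j\in[l]$, $v_{j+1}=f(v_j)$; if $v_j=(r,k)$ with $k\in[l]$, $v_{j+1}=f(k)$; otherwise stop. If finite $(v_0..v_K)$ with $S$ the sum of first components of $v_j\in\mathbb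 R\times[l+n]$ ($1\le j\le K$): $v_K$ if $v_K\in\{\exists^*,\forall^*\}$; $k$ if $v_K=l+k$ and $v_j\in[l]$ for $1\le j<K$; $(S,k)$ if $v_K=l+k$ and some earlier $v_j\in\mathbb R\times[l]$; $(S,k)$ if $v_K=(r,l+k)$. If infinite, with $w'_t$ the first components of the (infinitely many) entries in $\mathbb R\times[l]$: $\exists^*$ if $\liminf_N\frac1N\sum_{t\le N}w'_t\ge0$, else $\forall^*$. For a poset $X$, $\mathcal M(X)$ is the set of nonempty finite subsets of pairwise incomparable elements; for a set $S$ of elements of a poset, $S^{\circ}$ is its set of maximal elements. $\mathcal M_{\max\star}(\mathbb S^{\mathrm{m},\mathbb P}_r)$ (change of base along $\mathcal M_{\max}$) has natural numbers as objects; its arrows $m\to n$ are the elements of $\mathcal M(\mathbb S^{\mathrm{m},\mathbb P}_r(m,n))$; $S;T=\{f;g\mid f\in S,g\in T\}^{\circ}$, $S\oplus T=\{f\oplus g\mid f\in S,g\in T\}^{\circ}$, $\mathrm{tr}^l_{m,n}(S)=\{\mathrm{tr}^l_{m,n}(f)\mid f\in S\}^{\circ}$, identities $\{\mathrm{id}_m\}$, symmetries $\{\sigma_{m,n}\}$, unit object $0$. *)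

theory Defs
  imports Complex_Main "HOL-Library.Extended_Real" "HOL-Library.Liminf_Limsup"
    "HOL-Library.Infinite_Set"
begin

text \<open>Objects are natural numbers, the monoidal product on objects is addition, the
unit object is 0 (so associators and unitors are identities).  Composition is
diagrammatic: cmp f g means first f then g.  The trace traces out the first
(leftmost) l wires: tr l m n maps hom (l+m) (l+n) to hom m n.  Axioms follow
Joyal-Street-Verity (tightening, sliding, vanishing, superposing, yanking).\<close>

definition traced_smc ::
  "(nat \<Rightarrow> nat \<Rightarrow> 'a set) \<Rightarrow> ('a \<Rightarrow> 'a \<Rightarrow> 'a) \<Rightarrow> (nat \<Rightarrow> 'a) \<Rightarrow>
   (nat \<Rightarrow> nat \<Rightarrow> nat \<Rightarrow> nat \<Rightarrow> 'a \<Rightarrow> 'a \<Rightarrow> 'a) \<Rightarrow> (nat \<Rightarrow> nat \<Rightarrow> 'a) \<Rightarrow>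
   (nat \<Rightarrow> nat \<Rightarrow> nat \<Rightarrow> 'a \<Rightarrow> 'a) \<Rightarrow> bool" where
  "traced_smc hom cmp idm tens sy tr \<longleftrightarrow>
    \<comment> \<open>category\<close>
    (\<forall>m n p f g. f \<in> hom m n \<longrightarrow> g \<in> hom n p \<longrightarrow> cmp f g \<in> hom m p) \<and>
    (\<forall>m. idm m \<in> hom m m) \<and>
    (\<forall>m n f. f \<in> hom m n \<longrightarrow> cmp (idm m) f = f \<and> cmp f (idm n) = f) \<and>
    (\<forall>m n p q f g h. f \<in> hom m n \<longrightarrow> g \<in> hom n p \<longrightarrow> h \<in> hom p q \<longrightarrow>
        cmp (cmp f g) h = cmp f (cmp g h)) \<and>
    \<comment> \<open>monoidal product (strict)\<close>
    (\<forall>m n m' n' f g. f \<in> hom m n \<longrightarrow> g \<in> hom m' n' \<longrightarrow>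
        tens m n m' n' f g \<in> hom (m + m') (n + n')) \<and>
    (\<forall>m m'. tens m m m' m' (idm m) (idm m') = idm (m + m')) \<and>
    (\<forall>m n p m' n' p' f g f' g'. f \<in> hom m n \<longrightarrow> g \<in> hom n p \<longrightarrow>
        f' \<in> hom m' n' \<longrightarrow> g' \<in> hom n' p' \<longrightarrow>
        tens m p m' p' (cmp f g) (cmp f' g') =
        cmp (tens m n m' n' f f') (tens n p n' p' g g')) \<and>
    (\<forall>m n m' n' m'' n'' f g h. f \<in> hom m n \<longrightarrow> g \<in> hom m' n' \<longrightarrow> h \<in> hom m'' n'' \<longrightarrow>
        tens (m + m') (n + n') m'' n'' (tens m n m' n' f g) h =
        tens m n (m' + m'') (n' + n'') f (tens m' n' m'' n'' g h)) \<and>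
    (\<forall>m n f. f \<in> hom m n \<longrightarrow> tens 0 0 m n (idm 0) f = f \<and> tens m n 0 0 f (idm 0) = f) \<and>
    \<comment> \<open>symmetry\<close>
    (\<forall>m n. sy m n \<in> hom (m + n) (n + m)) \<and>
    (\<forall>m n m' n' f g. f \<in> hom m n \<longrightarrow> g \<in> hom m' n' \<longrightarrow>
        cmp (tens m n m' n' f g) (sy n n') = cmp (sy m m') (tens m' n' m n g f)) \<and>
    (\<forall>m n. cmp (sy m n) (sy n m) = idm (m + n)) \<and>
    (\<forall>m n p. sy m (n + p) =
        cmp (tens (m + n) (n + m) p p (sy m n) (idm p)) (tens n n (m + p) (p + m) (idm n) (sy m p))) \<and>
    \<comment> \<open>trace\<close>
    (\<forall>l m n f. f \<in> hom (l + m) (l + n) \<longrightarrow> tr l m n f \<in> hom m n) \<and>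
    \<comment> \<open>tightening (naturality in m and n)\<close>
    (\<forall>l m n m' n' f g h. f \<in> hom (l + m) (l + n) \<longrightarrow> g \<in> hom m' m \<longrightarrow> h \<in> hom n n' \<longrightarrow>
        tr l m' n' (cmp (cmp (tens l l m' m (idm l) g) f) (tens l l n n' (idm l) h)) =
        cmp (cmp g (tr l m n f)) h) \<and>
    \<comment> \<open>sliding (dinaturality in l)\<close>
    (\<forall>l l' m n f g. f \<in> hom (l + m) (l' + n) \<longrightarrow> g \<in> hom l' l \<longrightarrow>
        tr l m n (cmp f (tens l' l n n g (idm n))) = tr l' m n (cmp (tens l' l m m g (idm m)) f)) \<and>
    \<comment> \<open>vanishing\<close>
    (\<forall>m n f. f \<in> hom m n \<longrightarrow> tr 0 m n f = f) \<and>
    (\<forall>l l' m n f. f \<in> hom (l + l' + m) (l + l' + n) \<longrightarrow>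
        tr (l + l') m n f = tr l' m n (tr l (l' + m) (l' + n) f)) \<and>
    \<comment> \<open>superposing\<close>
    (\<forall>l m n m' n' f g. f \<in> hom (l + m) (l + n) \<longrightarrow> g \<in> hom m' n' \<longrightarrow>
        tr l (m + m') (n + n') (tens (l + m) (l + n) m' n' f g) = tens m n m' n' (tr l m n f) g) \<and>
    \<comment> \<open>yanking\<close>
    (\<forall>l. tr l l l (sy l l) = idm l)"

text \<open>T(X) = X + R x X + {exists*, forall*}; indices are 1-based as in the paper.\<close>
datatype tv = TIdx nat | TW real nat | TEx | TAll

text \<open>An arrow m \<rightarrow> n is represented as the list [f(1),...,f(m)].\<close>
definition in_T :: "nat \<Rightarrow> tv \<Rightarrow> bool" where
  "in_T n v = (case v of TIdx j \<Rightarrow> 1 \<le> j \<and> j \<le> n | TW r j \<Rightarrow> 1 \<le> j \<and> j \<le> n | _ \<Rightarrow> True)"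

definition Shom :: "nat \<Rightarrow> nat \<Rightarrow> tv list set" where
  "Shom m n = {f. length f = m \<and> (\<forall>i<m. in_T n (f ! i)) \<and>
     (\<forall>i<m. \<forall>j<m. i \<noteq> j \<longrightarrow>
        (case f ! i of TIdx k \<Rightarrow> f ! j \<noteq> TIdx k \<and> (\<forall>r. f ! j \<noteq> TW r k) | _ \<Rightarrow> True))}"

definition tgen :: "tv \<Rightarrow> tv \<Rightarrow> bool" where
  "tgen a b \<longleftrightarrow> (\<exists>r1 r2 i. a = TW r1 i \<and> b = TW r2 i \<and> r1 \<ge> r2) \<or> a = TEx \<or> b = TAll"

definition tle :: "tv \<Rightarrow> tv \<Rightarrow> bool" where
  "tle = tgen\<^sup>*\<^sup>*"

definition hle :: "tv list \<Rightarrow> tv list \<Rightarrow> bool" where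
  "hle f g \<longleftrightarrow> list_all2 tle f g"

definition Scomp :: "tv list \<Rightarrow> tv list \<Rightarrow> tv list" where
  "Scomp f g = map (\<lambda>v. case v of
       TEx \<Rightarrow> TEx | TAll \<Rightarrow> TAll
     | TIdx j \<Rightarrow> g ! (j - 1)
     | TW r j \<Rightarrow> (case g ! (j - 1) of TEx \<Rightarrow> TEx | TAll \<Rightarrow> TAll
                   | TIdx k \<Rightarrow> TW r k | TW r' k \<Rightarrow> TW (r + r') k)) f"

definition Sid :: "nat \<Rightarrow> tv list" where
  "Sid m = map TIdx [1..<m+1]"

definition Ssym :: "nat \<Rightarrow> nat \<Rightarrow> tv list" where
  "Ssym m n = map (\<lambda>i. TIdx (n + i)) [1..<m+1] @ map TIdx [1..<n+1]"

definition tshift :: "nat \<Rightarrow> tv \<Rightarrow> tv" where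
  "tshift n v = (case v of TIdx j \<Rightarrow> TIdx (n + j) | TW r j \<Rightarrow> TW r (n + j) | _ \<Rightarrow> v)"

definition Stens :: "nat \<Rightarrow> tv list \<Rightarrow> tv list \<Rightarrow> tv list" where
  "Stens n f g = f @ map (tshift n) g"

definition next_idx :: "nat \<Rightarrow> tv \<Rightarrow> nat option" where
  "next_idx l v = (case v of TIdx k \<Rightarrow> if 1 \<le> k \<and> k \<le> l then Some k else None
                           | TW r k \<Rightarrow> if 1 \<le> k \<and> k \<le> l then Some k else None
                           | _ \<Rightarrow> None)"

text \<open>The sequence v_0, v_1, ... (it stutters once it has stopped; only the part up to the
stopping index is used).\<close>
fun vseq :: "nat \<Rightarrow> tv list \<Rightarrow> nat \<Rightarrow> nat \<Rightarrow> tv" where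
  "vseq l f i 0 = TIdx (l + i)"
| "vseq l f i (Suc 0) = f ! (l + i - 1)"
| "vseq l f i (Suc (Suc j)) =
     (case next_idx l (vseq l f i (Suc j)) of Some k \<Rightarrow> f ! (k - 1) | None \<Rightarrow> vseq l f i (Suc j))"

definition wt :: "tv \<Rightarrow> real" where
  "wt v = (case v of TW r _ \<Rightarrow> r | _ \<Rightarrow> 0)"

definition is_idx :: "tv \<Rightarrow> bool" where
  "is_idx v = (case v of TIdx _ \<Rightarrow> True | _ \<Rightarrow> False)"

definition is_w :: "tv \<Rightarrow> bool" where
  "is_w v = (case v of TW _ _ \<Rightarrow> True | _ \<Rightarrow> False)"

definition trace_at :: "nat \<Rightarrow> tv list \<Rightarrow> nat \<Rightarrow> tv" where
  "trace_at l f i =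
    (if \<exists>K\<ge>1. next_idx l (vseq l f i K) = None then
       (let K = (LEAST K. K \<ge> 1 \<and> next_idx l (vseq l f i K) = None);
            S = (\<Sum>j\<in>{1..K}. wt (vseq l f i j))
        in case vseq l f i K of
             TEx \<Rightarrow> TEx
           | TAll \<Rightarrow> TAll
           | TIdx p \<Rightarrow> (if \<forall>j\<in>{1..<K}. is_idx (vseq l f i j) then TIdx (p - l) else TW S (p - l))
           | TW r p \<Rightarrow> TW S (p - l))
     else
       (let Ws = {j. 1 \<le> j \<and> is_w (vseq l f i j)};
            w' = (\<lambda>t. wt (vseq l f i (enumerate Ws (t - 1))))
        in if liminf (\<lambda>N. ereal ((\<Sum>t\<in>{1..N}. w' t) / real N)) \<ge> 0 then TEx else TAll))"

definition Str :: "nat \<Rightarrow> tv list \<Rightarrow> tv list" where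
  "Str l f = map (trace_at l f) [1..<length f - l + 1]"

definition antichain_h :: "tv list set \<Rightarrow> bool" where
  "antichain_h S \<longleftrightarrow> (\<forall>x\<in>S. \<forall>y\<in>S. x \<noteq> y \<longrightarrow> \<not> hle x y \<and> \<not> hle y x)"

definition Mhom :: "nat \<Rightarrow> nat \<Rightarrow> tv list set set" where
  "Mhom m n = {S. S \<subseteq> Shom m n \<and> finite S \<and> S \<noteq> {} \<and> antichain_h S}"

definition maxel :: "tv list set \<Rightarrow> tv list set" where
  "maxel S = {x \<in> S. \<not> (\<exists>y\<in>S. hle x y \<and> x \<noteq> y)}"

definition Mcomp :: "tv list set \<Rightarrow> tv list set \<Rightarrow> tv list set" where
  "Mcomp S T = maxel {Scomp f g | f g. f \<in> S \<and> g \<in> T}"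

definition Mid :: "nat \<Rightarrow> tv list set" where
  "Mid m = {Sid m}"

definition Msym :: "nat \<Rightarrow> nat \<Rightarrow> tv list set" where
  "Msym m n = {Ssym m n}"

definition Mtens :: "nat \<Rightarrow> nat \<Rightarrow> nat \<Rightarrow> nat \<Rightarrow> tv list set \<Rightarrow> tv list set \<Rightarrow> tv list set" where
  "Mtens m n m' n' S T = maxel {Stens n f g | f g. f \<in> S \<and> g \<in> T}"

definition Mtr :: "nat \<Rightarrow> nat \<Rightarrow> nat \<Rightarrow> tv list set \<Rightarrow> tv list set" where
  "Mtr l m n S = maxel (Str l ` S)"

end

theory Submission
  imports Defs
begin

lemma tle_iff: "tle a b \<longleftrightarrow> a = b \<or> a = TEx \<or> b = TAll \<or> (\<exists>r1 r2 i. a = TW r1 i \<and> b = TW r2 i \<and> r2 \<le> r1)"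
proof
  assume "tle a b"
  then show "a = b \<or> a = TEx \<or> b = TAll \<or> (\<exists>r1 r2 i. a = TW r1 i \<and> b = TW r2 i \<and> r2 \<le> r1)"
    unfolding tle_def
  proof (induction rule: rtranclp_induct)
    case base then show ?case by simp
  next
    case (step y z)
    from step.hyps(2) step.IH show ?case unfolding tgen_def by auto
  qed
next
  assume "a = b \<or> a = TEx \<or> b = TAll \<or> (\<exists>r1 r2 i. a = TW r1 i \<and> b = TW r2 i \<and> r2 \<le> r1)"
  then show "tle a b" unfolding tle_def
    by (metis (mono_tags) rtranclp.rtrancl_refl r_into_rtranclp tgen_def)
qed

lemma tle_refl[simp]: "tle a a" by (simp add: tle_iff)
lemma tle_trans: "tle a b \<Longrightarrow> tle b c \<Longrightarrow> tle a c"
  unfolding tle_def by (rule rtranclp_trans)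
lemma tle_antisym: "tle a b \<Longrightarrow> tle b a \<Longrightarrow> a = b"
  unfolding tle_iff by auto
lemma tle_Ex[simp]: "tle TEx b" by (simp add: tle_iff)
lemma tle_All[simp]: "tle a TAll" by (simp add: tle_iff)

lemma hle_refl[simp]: "hle f f" unfolding hle_def by (simp add: list_all2_refl)
lemma hle_trans: "hle f g \<Longrightarrow> hle g h \<Longrightarrow> hle f h"
  unfolding hle_def using list_all2_trans tle_trans by blast
lemma hle_antisym: "hle f g \<Longrightarrow> hle g f \<Longrightarrow> f = g"
  unfolding hle_def list_all2_conv_all_nth
  by (metis nth_equalityI tle_antisym)
lemma hle_iff: "hle f g \<longleftrightarrow> length f = length g \<and> (\<forall>i<length f. tle (f!i) (g!i))"
  unfolding hle_def list_all2_conv_all_nth by simp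

lemma maxel_sub: "maxel S \<subseteq> S" unfolding maxel_def by auto

lemma maxel_exists:
  assumes "finite S" "x \<in> S"
  shows "\<exists>y\<in>maxel S. hle x y"
proof -
  have "\<forall>x\<in>S. \<exists>y\<in>maxel S. hle x y"
  proof (rule ccontr)
    assume "\<not> ?thesis"
    then obtain x0 where x0: "x0 \<in> S" "\<not>(\<exists>y\<in>maxel S. hle x0 y)" by blast
    define B where "B = {y\<in>S. hle x0 y}"
    have finB: "finite B" using assms(1) B_def by simp
    have "\<forall>y\<in>B. \<exists>z\<in>B. hle y z \<and> y \<noteq> z"
    proof
      fix y assume y: "y \<in> B"
      then have "y \<notin> maxel S" using x0 B_def by auto
      then obtain z where "z \<in> S" "hle y z" "y \<noteq> z" using y B_def unfolding maxel_def by auto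
      then show "\<exists>z\<in>B. hle y z \<and> y \<noteq> z" using y B_def hle_trans by blast
    qed
    moreover have "x0 \<in> B" using x0 B_def by simp
    ultimately show False
    proof -
      assume H: "\<forall>y\<in>B. \<exists>z\<in>B. hle y z \<and> y \<noteq> z" and "x0 \<in> B"
      define R where "R = {(z,y). z \<in> B \<and> y \<in> B \<and> hle y z \<and> y \<noteq> z}"
      have "R \<subseteq> B \<times> B" unfolding R_def by auto
      have trR: "trans R" unfolding R_def trans_def using hle_trans hle_antisym by blast
      have irR: "irrefl R" unfolding R_def irrefl_def by auto
      have "finite R" using finB \<open>R \<subseteq> B \<times> B\<close> finite_subset by blast
      then have "wf R" using trR irR by (simp add: wf_iff_acyclic_if_finite acyclic_irrefl trancl_id)
      then obtain m where "m \<in> B" "\<forall>y. (y, m) \<in> R \<longrightarrow> y \<notin> B"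
        using \<open>x0 \<in> B\<close> by (metis wf_eq_minimal)
      then show False using H R_def by blast
    qed
  qed
  then show ?thesis using assms(2) by blast
qed

lemma maxel_nonempty: "finite S \<Longrightarrow> S \<noteq> {} \<Longrightarrow> maxel S \<noteq> {}"
  using maxel_exists by blast

lemma maxel_antichain: "antichain_h (maxel S)"
  unfolding antichain_h_def maxel_def by auto

lemma maxel_antichain_id: "antichain_h S \<Longrightarrow> maxel S = S"
  unfolding antichain_h_def maxel_def by auto

lemma maxel_finite: "finite S \<Longrightarrow> finite (maxel S)"
  using maxel_sub finite_subset by blast

lemma maxel_eqI:
  assumes fin: "finite B" and sub: "A \<subseteq> B" and dom: "\<forall>b\<in>B. \<exists>a\<in>A. hle b a"
  shows "maxel A = maxel B"
proof
  show "maxel A \<subseteq> maxel B"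
  proof
    fix x assume x: "x \<in> maxel A"
    have "x \<in> B" using x sub maxel_sub by blast
    moreover have "\<not>(\<exists>y\<in>B. hle x y \<and> x \<noteq> y)"
    proof
      assume "\<exists>y\<in>B. hle x y \<and> x \<noteq> y"
      then obtain y where y: "y \<in> B" "hle x y" "x \<noteq> y" by blast
      obtain a where a: "a \<in> A" "hle y a" using dom y by blast
      have "hle x a" using y a hle_trans by blast
      moreover have "x \<noteq> a" using y a hle_antisym by blast
      ultimately show False using x a unfolding maxel_def by blast
    qed
    ultimately show "x \<in> maxel B" unfolding maxel_def by blast
  qed
next
  show "maxel B \<subseteq> maxel A"
  proof
    fix x assume x: "x \<in> maxel B"
    then have xB: "x \<in> B" using maxel_sub by blast
    obtain a where a: "a \<in> A" "hle x a" using dom xB by blast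
    have "a \<in> B" using a sub by blast
    then have "x = a" using x a unfolding maxel_def by blast
    then have "x \<in> A" using a by simp
    then show "x \<in> maxel A" using x sub unfolding maxel_def by blast
  qed
qed

lemma maxel_image_maxel:
  assumes fin: "finite A" and mono: "\<And>a b. a \<in> A \<Longrightarrow> b \<in> A \<Longrightarrow> hle a b \<Longrightarrow> hle (\<phi> a) (\<phi> b)"
  shows "maxel (\<phi> ` maxel A) = maxel (\<phi> ` A)"
  apply (rule maxel_eqI)
  using fin maxel_sub apply auto
  by (meson fin maxel_exists maxel_sub mono subsetD)

lemma maxel_maxel: "finite A \<Longrightarrow> maxel (maxel A) = maxel A"
  using maxel_image_maxel[of A "\<lambda>x. x"] by simp

lemma set2_image: "{\<phi> a b | a b. a \<in> A \<and> b \<in> B} = (\<lambda>(a,b). \<phi> a b) ` (A \<times> B)"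
  by auto

lemma maxel2_left:
  assumes fA: "finite A" and fB: "finite B"
    and mono: "\<And>a a' b. a \<in> A \<Longrightarrow> a' \<in> A \<Longrightarrow> b \<in> B \<Longrightarrow> hle a a' \<Longrightarrow> hle (\<phi> a b) (\<phi> a' b)"
  shows "maxel {\<phi> a b | a b. a \<in> maxel A \<and> b \<in> B} = maxel {\<phi> a b | a b. a \<in> A \<and> b \<in> B}"
  apply (rule maxel_eqI)
  subgoal using fA fB by (simp add: set2_image)
  subgoal using maxel_sub by blast
  subgoal by (smt (verit, best) fA maxel_exists maxel_sub mem_Collect_eq mono subsetD)
  done

lemma maxel2_right:
  assumes fA: "finite A" and fB: "finite B"
    and mono: "\<And>a b b'. a \<in> A \<Longrightarrow> b \<in> B \<Longrightarrow> b' \<in> B \<Longrightarrow> hle b b' \<Longrightarrow> hle (\<phi> a b) (\<phi> a b')"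
  shows "maxel {\<phi> a b | a b. a \<in> A \<and> b \<in> maxel B} = maxel {\<phi> a b | a b. a \<in> A \<and> b \<in> B}"
  apply (rule maxel_eqI)
  subgoal using fA fB by (simp add: set2_image)
  subgoal using maxel_sub by blast
  subgoal by (smt (verit, best) fB maxel_exists maxel_sub mem_Collect_eq mono subsetD)
  done


definition addw :: "real \<Rightarrow> tv \<Rightarrow> tv" where
  "addw r x = (case x of TEx \<Rightarrow> TEx | TAll \<Rightarrow> TAll | TIdx k \<Rightarrow> TW r k | TW r' k \<Rightarrow> TW (r + r') k)"

definition ap :: "tv \<Rightarrow> tv list \<Rightarrow> tv" where
  "ap v g = (case v of TEx \<Rightarrow> TEx | TAll \<Rightarrow> TAll | TIdx j \<Rightarrow> g ! (j - 1) | TW r j \<Rightarrow> addw r (g ! (j - 1)))"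

definition tgt :: "tv \<Rightarrow> nat option" where
  "tgt v = (case v of TIdx k \<Rightarrow> Some k | TW r k \<Rightarrow> Some k | _ \<Rightarrow> None)"

lemma addw_simps[simp]: "addw r TEx = TEx" "addw r TAll = TAll" "addw r (TIdx k) = TW r k"
  "addw r (TW s k) = TW (r + s) k"
  by (simp_all add: addw_def)

lemma ap_simps[simp]: "ap TEx g = TEx" "ap TAll g = TAll" "ap (TIdx j) g = g ! (j - 1)"
  "ap (TW r j) g = addw r (g ! (j - 1))"
  by (simp_all add: ap_def)

lemma tgt_simps[simp]: "tgt TEx = None" "tgt TAll = None" "tgt (TIdx k) = Some k" "tgt (TW r k) = Some k"
  by (simp_all add: tgt_def)

lemma addw_addw[simp]: "addw r (addw s x) = addw (r + s) x"
  by (cases x) (simp_all add: add.assoc)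

lemma tgt_addw[simp]: "tgt (addw r x) = tgt x" by (cases x) simp_all

lemma in_T_tgt: "in_T n v \<longleftrightarrow> (\<forall>k. tgt v = Some k \<longrightarrow> 1 \<le> k \<and> k \<le> n)"
  by (cases v) (simp_all add: in_T_def)

lemma in_T_simps[simp]: "in_T n (TIdx k) \<longleftrightarrow> 1 \<le> k \<and> k \<le> n" "in_T n (TW r k) \<longleftrightarrow> 1 \<le> k \<and> k \<le> n"
  "in_T n TEx" "in_T n TAll"
  by (simp_all add: in_T_def)

lemma in_T_addw[simp]: "in_T n (addw r x) = in_T n x" by (simp add: in_T_tgt)

lemma Shom_iff: "f \<in> Shom m n \<longleftrightarrow> length f = m \<and> (\<forall>i<m. in_T n (f ! i)) \<and>
   (\<forall>i<m. \<forall>j<m. \<forall>k. i \<noteq> j \<longrightarrow> f ! i = TIdx k \<longrightarrow> tgt (f ! j) \<noteq> Some k)"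
proof -
  have "(case f ! i of TIdx k \<Rightarrow> f ! j \<noteq> TIdx k \<and> (\<forall>r. f ! j \<noteq> TW r k) | _ \<Rightarrow> True)
     \<longleftrightarrow> (\<forall>k. f ! i = TIdx k \<longrightarrow> tgt (f ! j) \<noteq> Some k)" for i j
    by (cases "f!i"; cases "f!j") auto
  then show ?thesis unfolding Shom_def by auto
qed

lemma ShomD:
  assumes "f \<in> Shom m n"
  shows "length f = m" "\<And>i. i < m \<Longrightarrow> in_T n (f ! i)"
    "\<And>i j k. i < m \<Longrightarrow> j < m \<Longrightarrow> i \<noteq> j \<Longrightarrow> f ! i = TIdx k \<Longrightarrow> tgt (f ! j) \<noteq> Some k"
  using assms unfolding Shom_iff by blast+

lemma Scomp_length[simp]: "length (Scomp f g) = length f" by (simp add: Scomp_def)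

lemma Scomp_nth[simp]: "i < length f \<Longrightarrow> Scomp f g ! i = ap (f ! i) g"
  unfolding Scomp_def by (cases "f ! i") (simp_all add: addw_def)

lemma addw_not_TIdx[simp]: "addw r x \<noteq> TIdx k" by (cases x) simp_all

lemma ap_TIdx_D: "ap v g = TIdx k \<Longrightarrow> \<exists>a. v = TIdx a \<and> g ! (a - 1) = TIdx k"
  by (cases v) auto

lemma tgt_ap_D: "tgt (ap v g) = Some k \<Longrightarrow> \<exists>b. tgt v = Some b \<and> tgt (g ! (b - 1)) = Some k"
  by (cases v) auto

lemma in_T_ap: assumes "in_T n v" "g \<in> Shom n p" shows "in_T p (ap v g)"
proof (cases v)
  case (TIdx x1) then show ?thesis using assms ShomD(2)[OF assms(2), of "x1 - 1"] by auto
next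
  case (TW x21 x22) then show ?thesis using assms ShomD(2)[OF assms(2), of "x22 - 1"] by auto
qed simp_all

lemma Scomp_Shom: assumes f: "f \<in> Shom m n" and g: "g \<in> Shom n p"
  shows "Scomp f g \<in> Shom m p"
  unfolding Shom_iff
proof (intro conjI allI impI)
  show "length (Scomp f g) = m" using ShomD[OF f] by simp
next
  fix i assume "i < m" then show "in_T p (Scomp f g ! i)"
    using ShomD(1)[OF f] in_T_ap[OF ShomD(2)[OF f] g] by simp
next
  fix i j k assume ij: "i < m" "j < m" "i \<noteq> j" and e: "Scomp f g ! i = TIdx k"
  have lf: "length f = m" using ShomD[OF f] by simp
  from e ij lf obtain a where a: "f ! i = TIdx a" "g ! (a - 1) = TIdx k" using ap_TIdx_D by force
  have ina: "1 \<le> a" "a \<le> n" using ShomD(2)[OF f ij(1)] a by auto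
  show "tgt (Scomp f g ! j) \<noteq> Some k"
  proof
    assume "tgt (Scomp f g ! j) = Some k"
    then obtain b where b: "tgt (f ! j) = Some b" "tgt (g ! (b - 1)) = Some k" using tgt_ap_D ij lf by force
    have inb: "1 \<le> b" "b \<le> n" using ShomD(2)[OF f ij(2)] b by (auto simp: in_T_tgt)
    show False
    proof (cases "a = b")
      case True then show ?thesis using ShomD(3)[OF f ij a(1)] b by simp
    next
      case False
      then have "a - 1 \<noteq> b - 1" "a - 1 < n" "b - 1 < n" using ina inb by auto
      then show ?thesis using ShomD(3)[OF g _ _ _ a(2)] b by blast
    qed
  qed
qed

lemma ap_addw: "ap (addw r x) h = addw r (ap x h)"
  by (cases x) simp_all

lemma ap_assoc: "in_T n v \<Longrightarrow> length g = n \<Longrightarrow> ap (ap v g) h = ap v (Scomp g h)"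
  by (cases v) (auto simp: ap_addw)

lemma Scomp_assoc: assumes f: "f \<in> Shom m n" and g: "g \<in> Shom n p"
  shows "Scomp (Scomp f g) h = Scomp f (Scomp g h)"
  apply (rule nth_equalityI)
  using ShomD(1,2)[OF f] ShomD(1)[OF g] ap_assoc[of n _ g h] by auto

lemma Sid_length[simp]: "length (Sid m) = m" by (simp add: Sid_def)
lemma Sid_nth[simp]: "i < m \<Longrightarrow> Sid m ! i = TIdx (Suc i)" by (simp add: Sid_def del: upt_Suc)

lemma Sid_Shom: "Sid m \<in> Shom m m"
  unfolding Shom_iff by auto

lemma ap_Sid: "in_T n v \<Longrightarrow> ap v (Sid n) = v"
  by (cases v) auto

lemma Scomp_Sid_left: "length f = m \<Longrightarrow> Scomp (Sid m) f = f"
  by (rule nth_equalityI) auto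

lemma Scomp_Sid_right: assumes "f \<in> Shom m n" shows "Scomp f (Sid n) = f"
  using ShomD(1,2)[OF assms] by (intro nth_equalityI) (auto simp: ap_Sid)

lemma tle_addw_w: "r2 \<le> r1 \<Longrightarrow> tle (addw r1 x) (addw r2 x)"
  by (cases x) (auto simp: tle_iff)

lemma tle_addw: "tle x y \<Longrightarrow> tle (addw r x) (addw r y)"
  unfolding tle_iff by (cases x; cases y) auto

lemma tle_ap_left: "tle v v' \<Longrightarrow> tle (ap v g) (ap v' g)"
  unfolding tle_iff[of v v'] by (auto intro: tle_addw_w)

lemma tle_ap_right: "in_T n v \<Longrightarrow> hle g g' \<Longrightarrow> length g = n \<Longrightarrow> tle (ap v g) (ap v g')"
  by (cases v) (auto simp: hle_iff intro: tle_addw)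

lemma Scomp_mono: assumes "hle f f'" "hle g g'" "f' \<in> Shom m n" "length g = n"
  shows "hle (Scomp f g) (Scomp f' g')"
  unfolding hle_iff
proof (intro conjI allI impI)
  show "length (Scomp f g) = length (Scomp f' g')" using assms(1) by (simp add: hle_iff)
next
  fix i assume i: "i < length (Scomp f g)"
  have l: "length f = length f'" using assms(1) by (simp add: hle_iff)
  have "tle (ap (f!i) g) (ap (f'!i) g)" using assms(1) i by (simp add: hle_iff tle_ap_left)
  moreover have "tle (ap (f'!i) g) (ap (f'!i) g')"
    using tle_ap_right[OF _ assms(2) assms(4)] ShomD[OF assms(3)] i l by simp
  ultimately show "tle (Scomp f g ! i) (Scomp f' g' ! i)" using i l tle_trans by simp
qed

lemma tshift_simps[simp]: "tshift n TEx = TEx" "tshift n TAll = TAll" "tshift n (TIdx k) = TIdx (n + k)"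
  "tshift n (TW r k) = TW r (n + k)"
  by (simp_all add: tshift_def)

lemma tshift_0[simp]: "tshift 0 v = v" by (cases v) simp_all
lemma tshift_0'[simp]: "tshift 0 = (\<lambda>v. v)" by (rule ext) simp
lemma tshift_tshift[simp]: "tshift n (tshift n' v) = tshift (n + n') v" by (cases v) simp_all
lemma tgt_tshift: "tgt (tshift n v) = map_option ((+) n) (tgt v)" by (cases v) simp_all

lemma Stens_length[simp]: "length (Stens n f g) = length f + length g" by (simp add: Stens_def)
lemma Stens_nth1[simp]: "i < length f \<Longrightarrow> Stens n f g ! i = f ! i" by (simp add: Stens_def nth_append)
lemma Stens_nth2[simp]: "length f \<le> i \<Longrightarrow> i < length f + length g \<Longrightarrow> Stens n f g ! i = tshift n (g ! (i - length f))"
  by (simp add: Stens_def nth_append)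

lemma Stens_Shom: assumes f: "f \<in> Shom m n" and g: "g \<in> Shom m' n'"
  shows "Stens n f g \<in> Shom (m + m') (n + n')"
  unfolding Shom_iff
proof (intro conjI allI impI)
  have lf: "length f = m" and lg: "length g = m'" using ShomD f g by auto
  show "length (Stens n f g) = m + m'" using lf lg by simp
  fix i assume i: "i < m + m'"
  show "in_T (n + n') (Stens n f g ! i)"
  proof (cases "i < m")
    case True then show ?thesis using ShomD(2)[OF f True] lf by (auto simp: in_T_tgt)
  next
    case False then have "i - m < m'" using i by simp
    then have "in_T n' (g ! (i - m))" using ShomD(2)[OF g] by blast
    then show ?thesis using False lf lg i by (auto simp: in_T_tgt tgt_tshift)
  qed
next
  have lf: "length f = m" and lg: "length g = m'" using ShomD f g by auto
  fix i j k assume ij: "i < m + m'" "j < m + m'" "i \<noteq> j" and e: "Stens n f g ! i = TIdx k"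
  show "tgt (Stens n f g ! j) \<noteq> Some k"
  proof (cases "i < m")
    case True
    then have fi: "f ! i = TIdx k" using e lf by simp
    have "k \<le> n" using ShomD(2)[OF f True] fi by (simp add: in_T_def)
    show ?thesis
    proof (cases "j < m")
      case True then show ?thesis using ShomD(3)[OF f \<open>i<m\<close> True ij(3) fi] lf by simp
    next
      case False
      then have "Stens n f g ! j = tshift n (g ! (j - m))" using lf lg ij by simp
      moreover have "j - m < m'" using False ij by simp
      ultimately show ?thesis using ShomD(2)[OF g, of "j-m"] \<open>k \<le> n\<close> by (auto simp: tgt_tshift in_T_tgt)
    qed
  next
    case False
    then have gi: "tshift n (g ! (i - m)) = TIdx k" using e lf lg ij by simp
    then obtain k' where k': "g ! (i - m) = TIdx k'" "k = n + k'" by (cases "g ! (i-m)") auto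
    have "1 \<le> k'" using ShomD(2)[OF g, of "i-m"] k' False ij by (simp add: in_T_def)
    show ?thesis
    proof (cases "j < m")
      case True then show ?thesis using ShomD(2)[OF f True] lf k' \<open>1 \<le> k'\<close> by (auto simp: in_T_tgt)
    next
      case False2: False
      then have "Stens n f g ! j = tshift n (g ! (j - m))" using lf lg ij by simp
      moreover have "i - m \<noteq> j - m" "i - m < m'" "j - m < m'" using False False2 ij by auto
      ultimately show ?thesis using ShomD(3)[OF g _ _ _ k'(1)] k' by (auto simp: tgt_tshift)
    qed
  qed
qed

lemma Stens_Sid: "Stens m (Sid m) (Sid m') = Sid (m + m')"
proof (rule nth_equalityI)
  fix i assume "i < length (Stens m (Sid m) (Sid m'))"
  then show "Stens m (Sid m) (Sid m') ! i = Sid (m + m') ! i"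
    by (cases "i < m") auto
qed simp

lemma ap_left: "in_T n v \<Longrightarrow> length g = n \<Longrightarrow> ap v (Stens p g g') = ap v g"
  by (cases v) auto

lemma tshift_addw: "tshift p (addw r x) = addw r (tshift p x)" by (cases x) simp_all

lemma ap_right: "in_T n' v \<Longrightarrow> length g = n \<Longrightarrow> length g' = n' \<Longrightarrow>
   ap (tshift n v) (Stens p g g') = tshift p (ap v g')"
  by (cases v) (auto simp: tshift_addw)

lemma Stens_interchange:
  assumes f: "f \<in> Shom m n" and g: "g \<in> Shom n p" and f': "f' \<in> Shom m' n'" and g': "g' \<in> Shom n' p'"
  shows "Stens p (Scomp f g) (Scomp f' g') = Scomp (Stens n f f') (Stens p g g')"
proof (rule nth_equalityI)
  note F = ShomD[OF f] and G = ShomD[OF g] and F' = ShomD[OF f'] and G' = ShomD[OF g']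
  show "length (Stens p (Scomp f g) (Scomp f' g')) = length (Scomp (Stens n f f') (Stens p g g'))" by simp
  fix i assume "i < length (Stens p (Scomp f g) (Scomp f' g'))"
  then have i: "i < m + m'" using F F' by simp
  show "Stens p (Scomp f g) (Scomp f' g') ! i = Scomp (Stens n f f') (Stens p g g') ! i"
  proof (cases "i < m")
    case True then show ?thesis using F(1,2) G(1) ap_left[of n "f!i" g p g'] by simp
  next
    case False then have "i - m < m'" using i by simp
    then show ?thesis using False F(1) G(1) F'(1,2) G'(1) i ap_right[of n' "f'!(i-m)" g n g' p] by simp
  qed
qed

lemma Stens_assoc: "Stens (n + n') (Stens n f g) h = Stens n f (Stens n' g h)"
  by (simp add: Stens_def add.commute)

lemma Stens_unit: "Stens 0 [] f = f" "Stens n f [] = f"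
  by (simp_all add: Stens_def)

lemma tle_tshift: "tle x y \<Longrightarrow> tle (tshift n x) (tshift n y)"
  unfolding tle_iff by (cases x; cases y) auto

lemma Stens_mono: "hle f f' \<Longrightarrow> hle g g' \<Longrightarrow> hle (Stens n f g) (Stens n f' g')"
  unfolding hle_def Stens_def
  by (simp add: list_all2_appendI list_all2_map1 list_all2_map2 list_all2_mono tle_tshift)

lemma Ssym_length[simp]: "length (Ssym m n) = m + n" by (simp add: Ssym_def)
lemma Ssym_nth: "i < m + n \<Longrightarrow> Ssym m n ! i = (if i < m then TIdx (n + Suc i) else TIdx (Suc (i - m)))"
  by (auto simp: Ssym_def nth_append)

lemma Ssym_Shom: "Ssym m n \<in> Shom (m + n) (n + m)"
  unfolding Shom_iff by (auto simp: Ssym_nth)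

lemma ap_Ssym1: "in_T n v \<Longrightarrow> ap v (Ssym n n') = tshift n' v"
  by (cases v) (auto simp: Ssym_nth)

lemma ap_Ssym2: "in_T n' v \<Longrightarrow> ap (tshift n v) (Ssym n n') = v"
  by (cases v) (auto simp: Ssym_nth)

lemma Ssym_natural:
  assumes f: "f \<in> Shom m n" and g: "g \<in> Shom m' n'"
  shows "Scomp (Stens n f g) (Ssym n n') = Scomp (Ssym m m') (Stens n' g f)"
proof (rule nth_equalityI)
  note F = ShomD[OF f] and G = ShomD[OF g]
  show "length (Scomp (Stens n f g) (Ssym n n')) = length (Scomp (Ssym m m') (Stens n' g f))"
    using F G by simp
  fix i assume "i < length (Scomp (Stens n f g) (Ssym n n'))"
  then have i: "i < m + m'" using F G by simp
  show "Scomp (Stens n f g) (Ssym n n') ! i = Scomp (Ssym m m') (Stens n' g f) ! i"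
  proof (cases "i < m")
    case True then show ?thesis using F G i by (simp add: Ssym_nth ap_Ssym1)
  next
    case False then show ?thesis using F G i by (simp add: Ssym_nth ap_Ssym2)
  qed
qed

lemma Ssym_inv: "Scomp (Ssym m n) (Ssym n m) = Sid (m + n)"
  by (rule nth_equalityI) (auto simp: Ssym_nth)

lemma Ssym_hex: "Ssym m (n + p) = Scomp (Stens (n + m) (Ssym m n) (Sid p)) (Stens n (Sid n) (Ssym m p))"
proof (rule nth_equalityI)
  show "length (Ssym m (n + p)) = length (Scomp (Stens (n + m) (Ssym m n) (Sid p)) (Stens n (Sid n) (Ssym m p)))"
    by simp
  fix i assume "i < length (Ssym m (n + p))"
  then have i: "i < m + (n + p)" by simp
  consider "i < m" | "m \<le> i" "i < m + n" | "m + n \<le> i" by linarith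
  then show "Ssym m (n + p) ! i = Scomp (Stens (n + m) (Ssym m n) (Sid p)) (Stens n (Sid n) (Ssym m p)) ! i"
  proof cases
    case 1
    have A: "Stens (n + m) (Ssym m n) (Sid p) ! i = TIdx (n + Suc i)" using 1 by (simp add: Ssym_nth)
    have B: "Stens n (Sid n) (Ssym m p) ! (n + i) = TIdx (n + (p + Suc i))" using 1 by (simp add: Ssym_nth)
    show ?thesis using 1 i A B by (simp add: Ssym_nth)
  next
    case 2
    have A: "Stens (n + m) (Ssym m n) (Sid p) ! i = TIdx (Suc (i - m))" using 2 by (simp add: Ssym_nth)
    have B: "Stens n (Sid n) (Ssym m p) ! (i - m) = TIdx (Suc (i - m))" using 2 by simp
    show ?thesis using 2 i A B by (simp add: Ssym_nth)
  next
    case 3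
    have A: "Stens (n + m) (Ssym m n) (Sid p) ! i = TIdx (Suc i)" using 3 i by simp
    have B: "Stens n (Sid n) (Ssym m p) ! i = TIdx (n + Suc (i - n - m))" using 3 i by (simp add: Ssym_nth)
    show ?thesis using 3 i A B by (simp add: Ssym_nth)
  qed
qed


section \<open>Paths and values\<close>

fun ps :: "nat \<Rightarrow> tv list \<Rightarrow> tv \<Rightarrow> nat \<Rightarrow> tv" where
  "ps l f v 0 = v"
| "ps l f v (Suc j) = (case next_idx l (ps l f v j) of Some k \<Rightarrow> f ! (k - 1) | None \<Rightarrow> ps l f v j)"

definition out :: "nat \<Rightarrow> tv \<Rightarrow> tv" where
  "out l v = (case v of TIdx p \<Rightarrow> TIdx (p - l) | TW r p \<Rightarrow> TW r (p - l) | x \<Rightarrow> x)"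

definition comb :: "tv \<Rightarrow> tv \<Rightarrow> tv" where
  "comb v x = (case v of TW r _ \<Rightarrow> addw r x | _ \<Rightarrow> x)"

fun runv :: "nat \<Rightarrow> tv list \<Rightarrow> tv \<Rightarrow> nat \<Rightarrow> tv" where
  "runv l f v 0 = out l v"
| "runv l f v (Suc K) = (case next_idx l v of None \<Rightarrow> out l v | Some k \<Rightarrow> comb v (runv l f (f ! (k - 1)) K))"

definition fin :: "nat \<Rightarrow> tv list \<Rightarrow> tv \<Rightarrow> bool" where
  "fin l f v \<longleftrightarrow> (\<exists>j. next_idx l (ps l f v j) = None)"

definition psum :: "nat \<Rightarrow> tv list \<Rightarrow> tv \<Rightarrow> nat \<Rightarrow> real" where
  "psum l f v N = (\<Sum>j<N. wt (ps l f v j))"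

definition bddb :: "(nat \<Rightarrow> real) \<Rightarrow> bool" where
  "bddb s \<longleftrightarrow> (\<exists>B. \<forall>N. B \<le> s N)"

definition sgnv :: "bool \<Rightarrow> tv" where
  "sgnv b = (if b then TEx else TAll)"

definition valB :: "nat \<Rightarrow> tv list \<Rightarrow> tv \<Rightarrow> tv" where
  "valB l f v = (if fin l f v then runv l f v (LEAST j. next_idx l (ps l f v j) = None)
                 else sgnv (bddb (psum l f v)))"

lemma next_idx_Some: "next_idx l v = Some k \<longleftrightarrow> tgt v = Some k \<and> 1 \<le> k \<and> k \<le> l"
  by (cases v) (auto simp: next_idx_def)

lemma next_idx_None: "next_idx l v = None \<longleftrightarrow> (\<forall>k. tgt v = Some k \<longrightarrow> \<not> (1 \<le> k \<and> k \<le> l))"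
  by (cases v) (auto simp: next_idx_def)

lemma next_idx_simps[simp]: "next_idx l TEx = None" "next_idx l TAll = None"
  "next_idx l (TIdx k) = (if 1 \<le> k \<and> k \<le> l then Some k else None)"
  "next_idx l (TW r k) = (if 1 \<le> k \<and> k \<le> l then Some k else None)"
  by (simp_all add: next_idx_def)

lemma wt_simps[simp]: "wt TEx = 0" "wt TAll = 0" "wt (TIdx k) = 0" "wt (TW r k) = r"
  by (simp_all add: wt_def)

lemma is_idx_simps[simp]: "is_idx TEx = False" "is_idx TAll = False" "is_idx (TIdx k) = True" "is_idx (TW r k) = False"
  by (simp_all add: is_idx_def)

lemma is_w_simps[simp]: "is_w TEx = False" "is_w TAll = False" "is_w (TIdx k) = False" "is_w (TW r k) = True"
  by (simp_all add: is_w_def)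

lemma out_simps[simp]: "out l TEx = TEx" "out l TAll = TAll" "out l (TIdx p) = TIdx (p - l)" "out l (TW r p) = TW r (p - l)"
  by (simp_all add: out_def)

lemma comb_simps[simp]: "comb (TW r k) x = addw r x" "comb (TIdx k) x = x" "comb TEx x = x" "comb TAll x = x"
  by (simp_all add: comb_def)

lemma comb_sgnv[simp]: "comb v (sgnv b) = sgnv b"
  by (cases v) (simp_all add: sgnv_def)

lemma addw_sgnv[simp]: "addw r (sgnv b) = sgnv b"
  by (simp add: sgnv_def)

lemma ps_Suc': "ps l f v (Suc j) = (case next_idx l v of None \<Rightarrow> v | Some k \<Rightarrow> ps l f (f ! (k - 1)) j)"
proof (induction j)
  case 0 then show ?case by (simp split: option.splits)
next
  case (Suc j)
  show ?case
  proof (cases "next_idx l v")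
    case None
    then have "ps l f v (Suc j) = v" using Suc by simp
    then show ?thesis using None by simp
  next
    case (Some k)
    then have "ps l f v (Suc j) = ps l f (f ! (k - 1)) j" using Suc by simp
    then show ?thesis using Some by (simp only: ps.simps) simp
  qed
qed

lemma ps_step: "ps l f v (Suc j) = (case next_idx l (ps l f v j) of Some k \<Rightarrow> f ! (k - 1) | None \<Rightarrow> ps l f v j)"
  by simp

declare ps.simps(2)[simp del]

lemma ps_Suc_Some: "next_idx l v = Some k \<Longrightarrow> ps l f v (Suc j) = ps l f (f ! (k - 1)) j"
  by (simp add: ps_Suc')

lemma ps_None: "next_idx l v = None \<Longrightarrow> ps l f v j = v"
  by (cases j) (simp_all add: ps_Suc')

lemma ps_stop: "next_idx l (ps l f v j) = None \<Longrightarrow> ps l f v (j + t) = ps l f v j"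
  by (induction t) (simp_all add: ps_step)

lemma ps_det: "ps l f v j = ps l f v j' \<Longrightarrow> ps l f v (j + t) = ps l f v (j' + t)"
  by (induction t) (simp_all only: add_Suc_right add_0_right ps_step)

lemma runv_stable:
  "next_idx l (ps l f v E) = None \<Longrightarrow> E \<le> K \<Longrightarrow> runv l f v K = runv l f v E"
proof (induction E arbitrary: v K)
  case 0
  then have "next_idx l v = None" by simp
  then show ?case by (cases K) simp_all
next
  case (Suc E)
  show ?case
  proof (cases "next_idx l v")
    case None
    then show ?thesis using Suc.prems by (cases K) simp_all
  next
    case (Some k)
    obtain K' where K: "K = Suc K'" using Suc.prems by (cases K) auto
    have "next_idx l (ps l f (f ! (k - 1)) E) = None" using Suc.prems(1) Some by (simp add: ps_Suc_Some)
    moreover have "E \<le> K'" using Suc.prems K by simp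
    ultimately have "runv l f (f ! (k - 1)) K' = runv l f (f ! (k - 1)) E" by (rule Suc.IH)
    then show ?thesis using K Some by simp
  qed
qed

lemma valB_fin:
  assumes "next_idx l (ps l f v K) = None"
  shows "valB l f v = runv l f v K"
proof -
  let ?E = "LEAST j. next_idx l (ps l f v j) = None"
  have "fin l f v" using assms fin_def by blast
  moreover have "next_idx l (ps l f v ?E) = None" using assms by (rule LeastI)
  moreover have "?E \<le> K" using assms by (rule Least_le)
  ultimately show ?thesis unfolding valB_def using runv_stable[of l f v ?E K] by simp
qed

lemma fin_step: "next_idx l v = Some k \<Longrightarrow> fin l f v \<longleftrightarrow> fin l f (f ! (k - 1))"
  unfolding fin_def
proof
  assume S: "next_idx l v = Some k" and "\<exists>j. next_idx l (ps l f v j) = None"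
  then obtain j where j: "next_idx l (ps l f v j) = None" by blast
  then have "j \<noteq> 0" using S by (cases j) auto
  then obtain j' where "j = Suc j'" by (cases j) auto
  then show "\<exists>j. next_idx l (ps l f (f ! (k - 1)) j) = None" using j S by (auto simp: ps_Suc_Some)
next
  assume S: "next_idx l v = Some k" and "\<exists>j. next_idx l (ps l f (f ! (k - 1)) j) = None"
  then obtain j where j: "next_idx l (ps l f (f ! (k - 1)) j) = None" by blast
  then show "\<exists>j. next_idx l (ps l f v j) = None" using S by (metis ps_Suc_Some)
qed

lemma psum_Suc_Some: "next_idx l v = Some k \<Longrightarrow> psum l f v (Suc N) = wt v + psum l f (f ! (k - 1)) N"
  unfolding psum_def sum.lessThan_Suc_shift by (simp add: ps_Suc_Some del: sum.lessThan_Suc)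

lemma bddb_shift: "(\<And>N. s (Suc N) = c + s' N) \<Longrightarrow> bddb s \<longleftrightarrow> bddb s'"
proof
  assume H: "\<And>N. s (Suc N) = c + s' N" and "bddb s"
  then obtain B where "\<forall>N. B \<le> s N" unfolding bddb_def by blast
  then have "\<forall>N. B - c \<le> s' N" using H by (metis diff_le_eq add.commute)
  then show "bddb s'" unfolding bddb_def by blast
next
  assume H: "\<And>N. s (Suc N) = c + s' N" and "bddb s'"
  then obtain B where B: "\<forall>N. B \<le> s' N" unfolding bddb_def by blast
  have "\<forall>N. min (s 0) (B + c) \<le> s N"
  proof
    fix N show "min (s 0) (B + c) \<le> s N"
      using B H by (cases N) (auto simp: min.coboundedI1 min.coboundedI2 add.commute)
  qed
  then show "bddb s" unfolding bddb_def by blast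
qed

lemma valB_step: "valB l f v = (case next_idx l v of None \<Rightarrow> out l v | Some k \<Rightarrow> comb v (valB l f (f ! (k - 1))))"
proof (cases "next_idx l v")
  case None
  then have "valB l f v = runv l f v 0" using valB_fin[of l f v 0] by simp
  then show ?thesis using None by simp
next
  case (Some k)
  let ?w = "f ! (k - 1)"
  show ?thesis
  proof (cases "fin l f ?w")
    case True
    then obtain K where K: "next_idx l (ps l f ?w K) = None" unfolding fin_def by blast
    then have "next_idx l (ps l f v (Suc K)) = None" using Some by (simp add: ps_Suc_Some)
    then have "valB l f v = runv l f v (Suc K)" by (rule valB_fin)
    also have "\<dots> = comb v (runv l f ?w K)" using Some by simp
    also have "\<dots> = comb v (valB l f ?w)" using valB_fin[OF K] by simp
    finally show ?thesis using Some by simp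
  next
    case False
    then have nf: "\<not> fin l f v" using fin_step[OF Some] by simp
    have "bddb (psum l f v) \<longleftrightarrow> bddb (psum l f ?w)"
      by (rule bddb_shift) (rule psum_Suc_Some[OF Some])
    then show ?thesis using nf False Some unfolding valB_def by simp
  qed
qed

lemma valB_exit: "next_idx l v = None \<Longrightarrow> valB l f v = out l v"
  by (subst valB_step) simp

lemma valB_Some: "next_idx l v = Some k \<Longrightarrow> valB l f v = comb v (valB l f (f ! (k - 1)))"
  by (subst valB_step) simp

lemma valB_selfloop:
  assumes S: "next_idx l u = Some k" and L: "f ! (k - 1) = u"
  shows "valB l f u = sgnv (0 \<le> wt u)"
proof -
  have L': "f ! (k - Suc 0) = u" using L by simp
  have P: "ps l f u j = u" for j
    by (induction j) (simp_all add: S L' ps_step)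
  have nf: "\<not> fin l f u" unfolding fin_def using P S by simp
  have ps: "psum l f u N = real N * wt u" for N unfolding psum_def P by simp
  have "bddb (psum l f u) \<longleftrightarrow> 0 \<le> wt u"
  proof
    assume "bddb (psum l f u)"
    then obtain B where B: "\<forall>N. B \<le> real N * wt u" unfolding bddb_def ps by blast
    show "0 \<le> wt u"
    proof (rule ccontr)
      assume neg: "\<not> 0 \<le> wt u"
      obtain N :: nat where "N > B / wt u" using reals_Archimedean2 by blast
      then have "real N * wt u < B" using neg by (simp add: pos_divide_less_eq neg_divide_less_eq mult.commute)
      then show False using B by (meson not_le)
    qed
  next
    assume "0 \<le> wt u" then show "bddb (psum l f u)" unfolding bddb_def ps by (auto intro: exI[of _ 0])
  qed
  then show ?thesis using nf unfolding valB_def by simp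
qed


section \<open>Abstract periodic sums\<close>

lemma per_shift:
  fixes y :: "nat \<Rightarrow> 'b" and q :: nat
  assumes per: "\<forall>t\<ge>a. y (t + P) = y t" and "a \<le> t"
  shows "y (t + q * P) = y t"
proof (induction q)
  case 0 then show ?case by simp
next
  case (Suc q)
  have "y (t + Suc q * P) = y ((t + q * P) + P)" by (simp add: algebra_simps)
  also have "\<dots> = y (t + q * P)" using per assms(2) by simp
  finally show ?case using Suc by simp
qed

lemma psum_periodic:
  fixes w :: "nat \<Rightarrow> real"
  assumes per: "\<forall>t\<ge>a. w (t + P) = w t" and M: "a \<le> M"
  shows "(\<Sum>j<M + q * P. w j) = (\<Sum>j<M. w j) + real q * ((\<Sum>j<a + P. w j) - (\<Sum>j<a. w j))"
proof -
  define s where "s N = (\<Sum>j<N. w j)" for N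
  define C where "C = s (a + P) - s a"
  have g: "s (M' + P) - s M' = C" if "a \<le> M'" for M'
    using that
  proof (induction M' rule: dec_induct)
    case base then show ?case by (simp add: C_def)
  next
    case (step n)
    have "s (Suc n + P) - s (Suc n) = (s (n + P) + w (n + P)) - (s n + w n)"
      by (simp add: s_def)
    also have "w (n + P) = w n" using per step.hyps(1) by simp
    finally show ?case using step.IH by simp
  qed
  have "s (M + q * P) = s M + real q * C"
  proof (induction q)
    case 0 then show ?case by simp
  next
    case (Suc q)
    have "s (M + Suc q * P) = s ((M + q * P) + P)" by (simp add: algebra_simps)
    also have "\<dots> = s (M + q * P) + C" using g[of "M + q * P"] M by simp
    finally show ?case using Suc by (simp add: algebra_simps)
  qed
  then show ?thesis unfolding s_def C_def by simp
qed

lemma psum_decomp: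
  fixes w :: "nat \<Rightarrow> real"
  assumes per: "\<forall>t\<ge>a. w (t + P) = w t" and P: "0 < P" and M: "a \<le> M"
  shows "\<exists>r q. r < P \<and> real q * real P > real M - real a - real P \<and>
     (\<Sum>j<M. w j) = (\<Sum>j<a + r. w j) + real q * ((\<Sum>j<a + P. w j) - (\<Sum>j<a. w j))"
proof -
  define r where "r = (M - a) mod P"
  define q where "q = (M - a) div P"
  have Mq: "M = (a + r) + q * P" using M unfolding r_def q_def by simp
  have rP: "r < P" using P unfolding r_def by simp
  have "real (M - a) = real r + real q * real P" using Mq by simp
  then have "real q * real P > real M - real a - real P" using rP M by (simp add: of_nat_diff)
  moreover have "(\<Sum>j<M. w j) = (\<Sum>j<a + r. w j) + real q * ((\<Sum>j<a + P. w j) - (\<Sum>j<a. w j))"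
    using psum_periodic[OF per, of "a + r" q] Mq by simp
  ultimately show ?thesis using rP by blast
qed

lemma psum_bdd_nonneg:
  fixes w :: "nat \<Rightarrow> real"
  assumes per: "\<forall>t\<ge>a. w (t + P) = w t" and P: "0 < P"
    and C: "(\<Sum>j<a + P. w j) - (\<Sum>j<a. w j) \<ge> 0"
  shows "bddb (\<lambda>N. \<Sum>j<N. w j)"
proof -
  define B where "B = Min ((\<lambda>N. \<Sum>j<N. w j) ` {..a + P})"
  have B: "B \<le> (\<Sum>j<N. w j)" if "N \<le> a + P" for N
    unfolding B_def using that by (intro Min_le) auto
  have "B \<le> (\<Sum>j<M. w j)" for M
  proof (cases "a \<le> M")
    case True
    then obtain r q where rq: "r < P" "(\<Sum>j<M. w j) = (\<Sum>j<a + r. w j) + real q * ((\<Sum>j<a + P. w j) - (\<Sum>j<a. w j))"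
      using psum_decomp[OF per P] by blast
    have "B \<le> (\<Sum>j<a + r. w j)" using B rq(1) by simp
    moreover have "0 \<le> real q * ((\<Sum>j<a + P. w j) - (\<Sum>j<a. w j))" using C by simp
    ultimately show ?thesis using rq(2) by linarith
  next
    case False then show ?thesis using B by simp
  qed
  then show ?thesis unfolding bddb_def by blast
qed

lemma psum_upper_neg:
  fixes w :: "nat \<Rightarrow> real"
  assumes per: "\<forall>t\<ge>a. w (t + P) = w t" and P: "0 < P"
    and C: "(\<Sum>j<a + P. w j) - (\<Sum>j<a. w j) < 0"
  shows "\<exists>K. \<forall>M\<ge>a. (\<Sum>j<M. w j) \<le> K + ((\<Sum>j<a + P. w j) - (\<Sum>j<a. w j)) / real P * real M"
proof -
  define C where "C = (\<Sum>j<a + P. w j) - (\<Sum>j<a. w j)"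
  define B where "B = Max ((\<lambda>N. \<Sum>j<N. w j) ` {..a + P})"
  have B: "(\<Sum>j<N. w j) \<le> B" if "N \<le> a + P" for N
    unfolding B_def using that by (intro Max_ge) auto
  have "(\<Sum>j<M. w j) \<le> (B - C - C * real a / real P) + C / real P * real M" if M: "a \<le> M" for M
  proof -
    obtain r q where rq: "r < P" "real q * real P > real M - real a - real P"
       "(\<Sum>j<M. w j) = (\<Sum>j<a + r. w j) + real q * C"
      using psum_decomp[OF per P M] unfolding C_def by blast
    have q: "real q > (real M - real a) / real P - 1" using rq(2) P
      by (simp add: field_simps)
    have "real q * C \<le> ((real M - real a) / real P - 1) * C"
      using q C unfolding C_def by (intro mult_right_mono_neg) auto
    also have "\<dots> = - C - C * real a / real P + C / real P * real M"
      using P by (simp add: field_simps)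
    finally show ?thesis using rq(3) B[of "a + r"] rq(1) by linarith
  qed
  then show ?thesis unfolding C_def by blast
qed

lemma not_w_wt: "\<not> is_w v \<Longrightarrow> wt v = 0"
  by (cases v) simp_all

lemma one_N_image: "{1..N} = Suc ` {..<(N::nat)}"
  using lessThan_atLeast0 atLeastLessThanSuc_atLeastAtMost image_Suc_atLeastLessThan by force

lemma sum_Suc_shift_1N: "(\<Sum>t\<in>{1..N::nat}. g (t - 1)) = (\<Sum>t<N. (g t :: real))"
  unfolding one_N_image by (simp add: sum.reindex)

lemma sum_Suc_shift_1M: "(\<Sum>j\<in>{1..M::nat}. g j) = (\<Sum>j<M. (g (Suc j) :: real))"
  unfolding one_N_image by (simp add: sum.reindex)

lemma liminf_crit:
  fixes x y :: "nat \<Rightarrow> tv"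
  assumes xy: "\<And>j. x (Suc j) = y j"
    and P: "0 < P" and per: "\<forall>t\<ge>a. y (t + P) = y t"
    and W: "\<exists>t\<ge>a. is_w (y t)"
  shows "(0 \<le> liminf (\<lambda>N. ereal ((\<Sum>t\<in>{1..N}. wt (x (enumerate {j. 1 \<le> j \<and> is_w (x j)} (t - 1)))) / real N)))
         \<longleftrightarrow> bddb (\<lambda>N. \<Sum>j<N. wt (y j))"
proof -
  define Ws where "Ws = {j. 1 \<le> j \<and> is_w (x j)}"
  define e where "e = enumerate Ws"
  define s where "s N = (\<Sum>j<N. wt (y j))" for N
  define A where "A N = (\<Sum>t\<in>{1..N}. wt (x (e (t - 1))))" for N
  define X where "X N = ereal (A N / real N)" for N
  obtain t0 where t0: "t0 \<ge> a" "is_w (y t0)" using W by blast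
  have perw: "\<forall>t\<ge>a. wt (y (t + P)) = wt (y t)" using per by simp
  have infW: "infinite Ws"
    unfolding infinite_nat_iff_unbounded_le
  proof
    fix m
    have "y (t0 + m * P) = y t0" using per_shift[OF per t0(1)] by blast
    then have "Suc (t0 + m * P) \<in> Ws" using t0 xy unfolding Ws_def by simp
    moreover have "m \<le> m * P" using P by simp
    then have "m \<le> Suc (t0 + m * P)" by linarith
    ultimately show "\<exists>n\<ge>m. n \<in> Ws" by blast
  qed
  have eW: "e k \<in> Ws" for k unfolding e_def using enumerate_in_set[OF infW] .
  have emono: "e k \<le> e k' \<longleftrightarrow> k \<le> k'" for k k' unfolding e_def using infW by simp
  have einj: "inj e" unfolding e_def using inj_enumerate[OF infW] .
  have ege: "Suc k \<le> e k" for k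
  proof (induction k)
    case 0 then show ?case using eW[of 0] unfolding Ws_def by simp
  next
    case (Suc k)
    have "e k < e (Suc k)" unfolding e_def using enumerate_step[OF infW] .
    then show ?case using Suc by simp
  qed
  have Ase: "A N = s (e (N - 1))" if N: "N \<ge> 1" for N
  proof -
    have "A N = (\<Sum>t<N. wt (x (e t)))" unfolding A_def by (rule sum_Suc_shift_1N)
    also have "\<dots> = (\<Sum>j\<in>e ` {..<N}. wt (x j))"
      by (simp add: sum.reindex inj_on_subset[OF einj])
    also have "\<dots> = (\<Sum>j\<in>{1..e (N - 1)}. wt (x j))"
    proof (rule sum.mono_neutral_left)
      show "finite {1..e (N - 1)}" by simp
      show "e ` {..<N} \<subseteq> {1..e (N - 1)}"
      proof
        fix j assume "j \<in> e ` {..<N}"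
        then obtain k where k: "k < N" "j = e k" by blast
        then show "j \<in> {1..e (N - 1)}" using ege[of k] emono[of k "N - 1"] by simp
      qed
      show "\<forall>i\<in>{1..e (N - 1)} - e ` {..<N}. wt (x i) = 0"
      proof
        fix i assume i: "i \<in> {1..e (N - 1)} - e ` {..<N}"
        show "wt (x i) = 0"
        proof (rule not_w_wt, rule notI)
          assume "is_w (x i)"
          then have "i \<in> Ws" using i unfolding Ws_def by simp
          then obtain k where k: "e k = i" unfolding e_def using enumerate_Ex[OF infW] by blast
          then have "k \<le> N - 1" using i emono[of k "N - 1"] by simp
          then have "k < N" using N by simp
          then show False using i k by blast
        qed
      qed
    qed
    also have "\<dots> = s (e (N - 1))" unfolding s_def using sum_Suc_shift_1M xy by simp
    finally show ?thesis .
  qed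
  have eN: "N \<le> e (N - 1)" if "N \<ge> 1" for N using ege[of "N - 1"] that by simp
  have lim_eq: "liminf (\<lambda>N. ereal ((\<Sum>t\<in>{1..N}. wt (x (enumerate {j. 1 \<le> j \<and> is_w (x j)} (t - 1)))) / real N)) = liminf X"
    unfolding X_def A_def e_def Ws_def ..
  show ?thesis
    unfolding lim_eq
  proof
    assume L: "0 \<le> liminf X"
    show "bddb (\<lambda>N. \<Sum>j<N. wt (y j))"
    proof (rule ccontr)
      assume nb: "\<not> bddb (\<lambda>N. \<Sum>j<N. wt (y j))"
      define C where "C = (\<Sum>j<a + P. wt (y j)) - (\<Sum>j<a. wt (y j))"
      have C: "C < 0" using psum_bdd_nonneg[OF perw P] nb unfolding C_def by force
      obtain K where K: "\<forall>M\<ge>a. s M \<le> K + C / real P * real M"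
        using psum_upper_neg[OF perw P] C unfolding C_def s_def by blast
      have CP: "C / real P < 0" using C P by (simp add: divide_neg_pos)
      have ev1: "eventually (\<lambda>N. A N / real N \<le> K / real N + C / real P) sequentially"
        unfolding eventually_sequentially
      proof (intro exI[of _ "max a 1"] allI impI)
        fix N assume N: "max a 1 \<le> N"
        have "s (e (N - 1)) \<le> K + C / real P * real (e (N - 1))" using K eN[of N] N by simp
        also have "\<dots> \<le> K + C / real P * real N"
          using CP eN[of N] N by (intro add_left_mono mult_left_mono_neg) auto
        finally have "A N \<le> K + C / real P * real N" using Ase[of N] N by simp
        then have "A N / real N \<le> (K + C / real P * real N) / real N" using N
          by (intro divide_right_mono) auto
        also have "\<dots> = K / real N + C / real P" using N by (simp add: field_simps)
        finally show "A N / real N \<le> K / real N + C / real P" .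
      qed
      have "(\<lambda>N. K / real N + C / real P) \<longlonglongrightarrow> 0 + C / real P"
        by (intro tendsto_add lim_const_over_n tendsto_const)
      moreover have "0 + C / real P < C / (2 * real P)"
      proof -
        have "C / (2 * real P) = (C / real P) / 2" by simp
        then show ?thesis using CP by linarith
      qed
      ultimately have ev2: "eventually (\<lambda>N. K / real N + C / real P < C / (2 * real P)) sequentially"
        by (rule order_tendstoD(2))
      have "eventually (\<lambda>N. X N \<le> ereal (C / (2 * real P))) sequentially"
        using ev1 ev2
      proof eventually_elim
        case (elim N)
        then have "A N / real N \<le> C / (2 * real P)" by linarith
        then show ?case unfolding X_def by simp
      qed
      then have "liminf X \<le> liminf (\<lambda>N. ereal (C / (2 * real P)))" by (rule Liminf_mono)
      also have "\<dots> = ereal (C / (2 * real P))" by (simp add: Liminf_const)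
      finally have "liminf X \<le> ereal (C / (2 * real P))" .
      moreover have "C / (2 * real P) < 0" using C P by (simp add: divide_neg_pos)
      ultimately show False
      proof -
        assume a1: "liminf X \<le> ereal (C / (2 * real P))" and a2: "C / (2 * real P) < 0"
        have "(0::ereal) \<le> ereal (C / (2 * real P))" using L a1 by (rule order_trans)
        then show False using a2 by (simp add: zero_ereal_def)
      qed
    qed
  next
    assume "bddb (\<lambda>N. \<Sum>j<N. wt (y j))"
    then obtain B where B: "\<forall>N. B \<le> s N" unfolding bddb_def s_def by blast
    define B' where "B' = min B 0"
    have B': "B' \<le> s N" "B' \<le> 0" for N using B unfolding B'_def by (auto simp: min.coboundedI1)
    have "eventually (\<lambda>N. ereal (B' / real N) \<le> X N) sequentially"
      unfolding eventually_sequentially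
    proof (intro exI[of _ 1] allI impI)
      fix N :: nat assume N: "1 \<le> N"
      have "B' \<le> A N" using Ase[OF N] B' by simp
      then have "B' / real N \<le> A N / real N" using N by (intro divide_right_mono) auto
      then show "ereal (B' / real N) \<le> X N" unfolding X_def by simp
    qed
    then have "liminf (\<lambda>N. ereal (B' / real N)) \<le> liminf X" by (rule Liminf_mono)
    moreover have "liminf (\<lambda>N. ereal (B' / real N)) = ereal 0"
      by (rule lim_imp_Liminf[OF trivial_limit_sequentially tendsto_ereal[OF lim_const_over_n]])
    ultimately show "0 \<le> liminf X" by (simp add: zero_ereal_def)
  qed
qed


section \<open>trace_at equals valB\<close>

lemma vseq_ps: "vseq l f i (Suc j) = ps l f (f ! (l + i - 1)) j"
proof (induction j)
  case 0 then show ?case by simp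
next
  case (Suc j)
  show ?case by (simp only: vseq.simps(3) Suc ps_step)
qed

lemma comb_Ex_All[simp]: "comb v TEx = TEx" "comb v TAll = TAll"
  by (cases v; simp)+

lemma idx_wt: "is_idx v \<Longrightarrow> wt v = 0" by (cases v) simp_all

lemma psum_idx0: "(\<forall>j<N. is_idx (ps l f v j)) \<Longrightarrow> psum l f v N = 0"
  unfolding psum_def by (simp add: idx_wt)

lemma psum_Suc: "psum l f v (Suc N) = psum l f v N + wt (ps l f v N)"
  unfolding psum_def by simp

lemma runv_formula:
  assumes "\<forall>j<E. next_idx l (ps l f v j) \<noteq> None" "next_idx l (ps l f v E) = None"
  shows "runv l f v E = (case ps l f v E of TEx \<Rightarrow> TEx | TAll \<Rightarrow> TAll
    | TIdx p \<Rightarrow> (if \<forall>j<E. is_idx (ps l f v j) then TIdx (p - l) else TW (psum l f v (Suc E)) (p - l))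
    | TW r p \<Rightarrow> TW (psum l f v (Suc E)) (p - l))"
  using assms
proof (induction E arbitrary: v)
  case 0
  then show ?case by (cases v) (simp_all add: psum_def)
next
  case (Suc E)
  from Suc.prems(1) obtain k where k: "next_idx l v = Some k" by (cases "next_idx l v") auto
  define w where "w = f ! (k - 1)"
  have pv: "ps l f v (Suc j) = ps l f w j" for j using k w_def by (simp add: ps_Suc_Some)
  have h1: "\<forall>j<E. next_idx l (ps l f w j) \<noteq> None" using Suc.prems(1) pv by (metis Suc_mono)
  have h2: "next_idx l (ps l f w E) = None" using Suc.prems(2) pv by simp
  have IH: "runv l f w E = (case ps l f w E of TEx \<Rightarrow> TEx | TAll \<Rightarrow> TAll
    | TIdx p \<Rightarrow> (if \<forall>j<E. is_idx (ps l f w j) then TIdx (p - l) else TW (psum l f w (Suc E)) (p - l))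
    | TW r p \<Rightarrow> TW (psum l f w (Suc E)) (p - l))" using Suc.IH[OF h1 h2] .
  have R: "runv l f v (Suc E) = comb v (runv l f w E)" using k w_def by simp
  have ps_eq: "ps l f v (Suc E) = ps l f w E" using pv .
  have sum_eq: "psum l f v (Suc (Suc E)) = wt v + psum l f w (Suc E)"
    using psum_Suc_Some[OF k] w_def by simp
  have all_eq: "(\<forall>j<Suc E. is_idx (ps l f v j)) \<longleftrightarrow> is_idx v \<and> (\<forall>j<E. is_idx (ps l f w j))"
    using pv by (auto simp: less_Suc_eq_0_disj)
  have v_cases: "(\<exists>c. v = TIdx c) \<or> (\<exists>r c. v = TW r c)" using k by (cases v) auto
  show ?case
  proof (cases "ps l f w E")
    case (TIdx p)
    show ?thesis
    proof (cases "\<forall>j<E. is_idx (ps l f w j)")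
      case True
      have z: "psum l f w (Suc E) = 0" using True TIdx by (intro psum_idx0) (auto simp: less_Suc_eq)
      from v_cases show ?thesis
        using R IH TIdx True ps_eq sum_eq all_eq z by auto
    next
      case False
      from v_cases show ?thesis
        using R IH TIdx False ps_eq sum_eq all_eq by auto
    qed
  next
    case (TW r p)
    from v_cases show ?thesis using R IH TW ps_eq sum_eq by auto
  next
    case TEx then show ?thesis using R IH ps_eq by simp
  next
    case TAll then show ?thesis using R IH ps_eq by simp
  qed
qed

lemma nf_next: "\<not> fin l f v \<Longrightarrow> \<exists>k. next_idx l (ps l f v j) = Some k"
  unfolding fin_def by auto

lemma nf_periodic:
  assumes nf: "\<not> fin l f v"
  shows "\<exists>a P. 0 < P \<and> (\<forall>t\<ge>a. ps l f v (t + P) = ps l f v t)"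
proof -
  define y where "y = ps l f v"
  define R where "R = (\<lambda>k. f ! (k - 1)) ` {1..l}"
  have sub: "y ` {1..Suc l} \<subseteq> R"
  proof
    fix z assume "z \<in> y ` {1..Suc l}"
    then obtain j where j: "j \<in> {1..Suc l}" "z = y j" by blast
    then obtain j' where j': "j = Suc j'" by (cases j) auto
    obtain k where k: "next_idx l (y j') = Some k" using nf_next[OF nf] y_def by blast
    then have "1 \<le> k" "k \<le> l" by (auto simp: next_idx_Some)
    moreover have "y j = f ! (k - 1)" using k j' y_def by (simp add: ps_step)
    ultimately show "z \<in> R" using j unfolding R_def by auto
  qed
  have cR: "card R \<le> l" unfolding R_def using card_image_le[of "{1..l}"] by simp
  have "\<not> inj_on y {1..Suc l}"
  proof
    assume "inj_on y {1..Suc l}"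
    then have "card (y ` {1..Suc l}) = Suc l" by (simp add: card_image)
    moreover have "card (y ` {1..Suc l}) \<le> card R" using sub unfolding R_def by (intro card_mono) auto
    ultimately show False using cR by simp
  qed
  then obtain a b where ab: "a \<noteq> b" "y a = y b" unfolding inj_on_def by blast
  have "\<exists>a b. a < b \<and> y a = y b"
  proof (cases "a < b")
    case True then show ?thesis using ab by blast
  next
    case False then have "b < a" using ab by simp
    then show ?thesis using ab by metis
  qed
  then obtain a b where ab: "a < b" "y a = y b" by blast
  have "\<forall>t\<ge>a. y (t + (b - a)) = y t"
  proof (intro allI impI)
    fix t assume t: "a \<le> t"
    have "y (a + (t - a)) = y (b + (t - a))" using ab(2) y_def ps_det by blast
    moreover have "t + (b - a) = b + (t - a)" using t ab by simp
    ultimately show "y (t + (b - a)) = y t" using t by simp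
  qed
  then show ?thesis using ab y_def by (intro exI[of _ a] exI[of _ "b - a"]) auto
qed

lemma nf_W:
  assumes f: "f \<in> Shom (l + m) (l + n)" and i: "1 \<le> i" "i \<le> m"
    and nf: "\<not> fin l f (f ! (l + i - 1))" and P: "0 < P"
    and per: "\<forall>t\<ge>a. ps l f (f ! (l + i - 1)) (t + P) = ps l f (f ! (l + i - 1)) t"
  shows "\<exists>t\<ge>a. is_w (ps l f (f ! (l + i - 1)) t)"
proof (rule ccontr)
  assume nW: "\<not> (\<exists>t\<ge>a. is_w (ps l f (f ! (l + i - 1)) t))"
  define y where "y = ps l f (f ! (l + i - 1))"
  have nx: "\<exists>k. next_idx l (y j) = Some k" for j using nf_next[OF nf] y_def by blast
  define s where "s j = (if j = 0 then l + i - 1 else the (next_idx l (y (j - 1))) - 1)" for j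
  have ys: "y j = f ! (s j)" for j
  proof (cases j)
    case 0 then show ?thesis by (simp add: y_def s_def)
  next
    case (Suc j')
    obtain k where k: "next_idx l (y j') = Some k" using nx by blast
    then show ?thesis using Suc by (simp add: y_def s_def ps_step)
  qed
  have sS: "s (Suc j) < l" "tgt (y j) = Some (Suc (s (Suc j)))" for j
  proof -
    obtain k where k: "next_idx l (y j) = Some k" using nx by blast
    then have "tgt (y j) = Some k" "1 \<le> k" "k \<le> l" by (auto simp: next_idx_Some)
    then show "s (Suc j) < l" "tgt (y j) = Some (Suc (s (Suc j)))" using k by (auto simp: s_def)
  qed
  have s0: "s 0 = l + i - 1" by (simp add: s_def)
  have sb: "s j < l + m" for j using sS(1)[of "j - 1"] s0 i by (cases j) auto
  have INJ: "y j = y j'" if "y j = TIdx c" "tgt (y j') = Some c" for j j' c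
  proof (cases "s j = s j'")
    case True then show ?thesis using ys by simp
  next
    case False
    then have False using ShomD(3)[OF f sb[of j] sb[of j'] False] that ys by simp
    then show ?thesis ..
  qed
  have INJs: "s j = s j'" if "y j = TIdx c" "tgt (y j') = Some c" for j j' c
  proof (rule ccontr)
    assume "s j \<noteq> s j'"
    then show False using ShomD(3)[OF f sb[of j] sb[of j']] that ys by simp
  qed
  have isidx: "\<exists>c. y t = TIdx c" if "a \<le> t" for t
  proof -
    have "\<not> is_w (y t)" using nW that y_def by blast
    moreover obtain k where "next_idx l (y t) = Some k" using nx by blast
    ultimately show ?thesis by (cases "y t") auto
  qed
  define Q where "Q a' = (y (a' + P) = y a')" for a'
  have Qa: "Q a" using per y_def Q_def by simp
  define a0 where "a0 = (LEAST a'. Q a')"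
  have Qa0: "Q a0" unfolding a0_def using Qa by (rule LeastI)
  have a0a: "a0 \<le> a" unfolding a0_def using Qa by (rule Least_le)
  have per0: "\<forall>t\<ge>a0. y (t + P) = y t"
  proof (intro allI impI)
    fix t assume t: "a0 \<le> t"
    have q: "y (a0 + P) = y a0" using Qa0 unfolding Q_def .
    have "y (a0 + P + (t - a0)) = y (a0 + (t - a0))" using ps_det[of l f "f ! (l + i - 1)" "a0 + P" a0 "t - a0"] q unfolding y_def by blast
    moreover have "a0 + P + (t - a0) = t + P" "a0 + (t - a0) = t" using t by simp_all
    ultimately show "y (t + P) = y t" by simp
  qed
  have idx0: "\<exists>c. y t = TIdx c" if "a0 \<le> t" for t
  proof -
    have "y (t + a * P) = y t" using per_shift[OF per0 that] .
    moreover have "a \<le> a * P" using P by simp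
    then have "a \<le> t + a * P" by linarith
    ultimately show ?thesis using isidx by metis
  qed
  show False
  proof (cases a0)
    case 0
    obtain c where c: "y P = TIdx c" using idx0 0 by blast
    have "y 0 = y P" using Qa0 0 Q_def by simp
    then have "tgt (y 0) = Some c" using c by simp
    then have "s P = s 0" using INJs[OF c] by blast
    moreover obtain P' where "P = Suc P'" using P by (cases P) auto
    ultimately show False using sS(1)[of P'] s0 i by simp
  next
    case (Suc a1)
    obtain c where c: "y (Suc a1) = TIdx c" using idx0 Suc by blast
    have "y (Suc a1 + P) = y (Suc a1)" using Qa0 Suc Q_def by simp
    then have "tgt (y (Suc a1 + P)) = Some c" using c by simp
    then have "s (Suc a1) = s (Suc a1 + P)" using INJs[OF c] by blast
    then have tg: "tgt (y a1) = tgt (y (a1 + P))" using sS(2)[of a1] sS(2)[of "a1 + P"] by simp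
    have "a0 \<le> a1 + P" using Suc P by simp
    then obtain c' where c': "y (a1 + P) = TIdx c'" using idx0 by blast
    then have "tgt (y a1) = Some c'" using tg by simp
    then have "y (a1 + P) = y a1" using INJ[OF c'] by blast
    then have "Q a1" unfolding Q_def .
    then have "a0 \<le> a1" unfolding a0_def by (rule Least_le)
    then show False using Suc by simp
  qed
qed

lemma trace_at_valB:
  assumes f: "f \<in> Shom (l + m) (l + n)" and i: "1 \<le> i" "i \<le> m"
  shows "trace_at l f i = valB l f (f ! (l + i - 1))"
proof -
  define v0 where "v0 = f ! (l + i - 1)"
  have vs: "vseq l f i (Suc j) = ps l f v0 j" for j using vseq_ps v0_def by simp
  have ex_iff: "(\<exists>K\<ge>1. next_idx l (vseq l f i K) = None) \<longleftrightarrow> fin l f v0"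
  proof
    assume "\<exists>K\<ge>1. next_idx l (vseq l f i K) = None"
    then obtain K where K: "K \<ge> 1" "next_idx l (vseq l f i K) = None" by blast
    then obtain K' where "K = Suc K'" by (cases K) auto
    then show "fin l f v0" using K vs unfolding fin_def by auto
  next
    assume "fin l f v0"
    then obtain j where "next_idx l (ps l f v0 j) = None" unfolding fin_def by blast
    then show "\<exists>K\<ge>1. next_idx l (vseq l f i K) = None" using vs by (intro exI[of _ "Suc j"]) auto
  qed
  show ?thesis
  proof (cases "fin l f v0")
    case True
    define E where "E = (LEAST j. next_idx l (ps l f v0 j) = None)"
    obtain j0 where j0: "next_idx l (ps l f v0 j0) = None" using True unfolding fin_def by blast
    have E1: "next_idx l (ps l f v0 E) = None" unfolding E_def using j0 by (rule LeastI)
    have E2: "\<forall>j<E. next_idx l (ps l f v0 j) \<noteq> None" unfolding E_def using not_less_Least by blast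
    have LK: "(LEAST K. K \<ge> 1 \<and> next_idx l (vseq l f i K) = None) = Suc E"
    proof -
      have "(LEAST K. K \<ge> 1 \<and> next_idx l (vseq l f i K) = None) = Suc (LEAST m. Suc m \<ge> 1 \<and> next_idx l (vseq l f i (Suc m)) = None)"
        by (rule Least_Suc[of _ "Suc E"]) (use E1 vs in auto)
      then show ?thesis unfolding E_def vs by simp
    qed
    have S: "(\<Sum>j\<in>{1..Suc E}. wt (vseq l f i j)) = psum l f v0 (Suc E)"
      unfolding sum_Suc_shift_1M vs psum_def ..
    have I: "(\<forall>j\<in>{1..<Suc E}. is_idx (vseq l f i j)) \<longleftrightarrow> (\<forall>j<E. is_idx (ps l f v0 j))"
    proof
      assume H: "\<forall>j\<in>{1..<Suc E}. is_idx (vseq l f i j)"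
      show "\<forall>j<E. is_idx (ps l f v0 j)"
      proof (intro allI impI)
        fix j assume "j < E" then show "is_idx (ps l f v0 j)" using H[rule_format, of "Suc j"] vs by simp
      qed
    next
      assume H: "\<forall>j<E. is_idx (ps l f v0 j)"
      show "\<forall>j\<in>{1..<Suc E}. is_idx (vseq l f i j)"
      proof
        fix j assume j: "j \<in> {1..<Suc E}"
        then obtain j' where "j = Suc j'" by (cases j) auto
        then show "is_idx (vseq l f i j)" using H j vs by simp
      qed
    qed
    have "valB l f v0 = runv l f v0 E" using valB_fin[OF E1] .
    also have "\<dots> = (case ps l f v0 E of TEx \<Rightarrow> TEx | TAll \<Rightarrow> TAll
      | TIdx p \<Rightarrow> (if \<forall>j<E. is_idx (ps l f v0 j) then TIdx (p - l) else TW (psum l f v0 (Suc E)) (p - l))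
      | TW r p \<Rightarrow> TW (psum l f v0 (Suc E)) (p - l))" using runv_formula[OF E2 E1] .
    finally have V: "valB l f v0 = \<dots>" .
    have "trace_at l f i = (case vseq l f i (Suc E) of TEx \<Rightarrow> TEx | TAll \<Rightarrow> TAll
      | TIdx p \<Rightarrow> (if \<forall>j\<in>{1..<Suc E}. is_idx (vseq l f i j) then TIdx (p - l) else TW (\<Sum>j\<in>{1..Suc E}. wt (vseq l f i j)) (p - l))
      | TW r p \<Rightarrow> TW (\<Sum>j\<in>{1..Suc E}. wt (vseq l f i j)) (p - l))"
      unfolding trace_at_def Let_def LK using ex_iff True by (simp only: if_True)
    also have "\<dots> = valB l f v0" unfolding V S I vs ..
    finally show ?thesis unfolding v0_def .
  next
    case False
    obtain a P where aP: "0 < P" "\<forall>t\<ge>a. ps l f v0 (t + P) = ps l f v0 t"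
      using nf_periodic[OF False] by blast
    have W: "\<exists>t\<ge>a. is_w (ps l f v0 t)" using nf_W[OF f i False[unfolded v0_def] aP(1)] aP(2) v0_def by blast
    have crit: "(0 \<le> liminf (\<lambda>N. ereal ((\<Sum>t\<in>{1..N}. wt (vseq l f i (enumerate {j. 1 \<le> j \<and> is_w (vseq l f i j)} (t - 1)))) / real N)))
         \<longleftrightarrow> bddb (\<lambda>N. \<Sum>j<N. wt (ps l f v0 j))"
      by (rule liminf_crit[OF vs aP W])
    have "trace_at l f i = sgnv (bddb (\<lambda>N. \<Sum>j<N. wt (ps l f v0 j)))"
      unfolding trace_at_def Let_def sgnv_def using ex_iff False crit by (simp only: if_False)
    also have "\<dots> = valB l f v0" unfolding valB_def using False by (simp add: psum_def[abs_def])
    finally show ?thesis unfolding v0_def .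
  qed
qed


lemma out_addw: "out l (addw r x) = addw r (out l x)"
  by (cases x) simp_all

lemma next_addw[simp]: "next_idx l (addw r x) = next_idx l x"
  by (cases x) simp_all

lemma comb_addw: "tgt u \<noteq> None \<Longrightarrow> comb (addw r u) x = addw r (comb u x)"
  by (cases u) simp_all

lemma valB_addw: "valB l f (addw r u) = addw r (valB l f u)"
proof (cases "next_idx l u")
  case None
  then show ?thesis by (simp add: valB_exit out_addw)
next
  case (Some k)
  then have "tgt u \<noteq> None" by (cases u) auto
  then show ?thesis using Some by (simp add: valB_Some comb_addw)
qed

lemma valB_comb: "valB l f (comb u x) = comb u (valB l f x)"
  by (cases u) (simp_all add: valB_addw)

lemma valB_chain:
  assumes "\<forall>i<j. next_idx l (ps l f v i) \<noteq> None" "valB l f (ps l f v j) = sgnv b"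
  shows "valB l f v = sgnv b"
  using assms
proof (induction j arbitrary: v)
  case 0 then show ?case by simp
next
  case (Suc j)
  obtain k where k: "next_idx l v = Some k" using Suc.prems(1) by (cases "next_idx l v") auto
  have "\<forall>i<j. next_idx l (ps l f (f ! (k - 1)) i) \<noteq> None"
  proof (intro allI impI)
    fix i assume "i < j"
    then have "next_idx l (ps l f v (Suc i)) \<noteq> None" using Suc.prems(1) by simp
    then show "next_idx l (ps l f (f ! (k - 1)) i) \<noteq> None" using k by (simp add: ps_Suc_Some)
  qed
  moreover have "valB l f (ps l f (f ! (k - 1)) j) = sgnv b" using Suc.prems(2) k by (simp add: ps_Suc_Some)
  ultimately have "valB l f (f ! (k - 1)) = sgnv b" by (rule Suc.IH)
  then show ?case using k by (simp add: valB_Some)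
qed

lemma valB_sgnv[simp]: "valB l f (sgnv b) = sgnv b"
  by (simp add: valB_exit sgnv_def)

text \<open>Exact correspondence between two systems.\<close>

lemma valB_corr:
  assumes stepc: "\<And>u. u \<in> D \<Longrightarrow> next_idx l' (\<rho> u) = map_option \<pi> (next_idx l u)"
    and succ: "\<And>u k. u \<in> D \<Longrightarrow> next_idx l u = Some k \<Longrightarrow> f ! (k - 1) \<in> D \<and> f' ! (\<pi> k - 1) = \<rho> (f ! (k - 1))"
    and wtc: "\<And>u. u \<in> D \<Longrightarrow> next_idx l u \<noteq> None \<Longrightarrow> wt (\<rho> u) = wt u"
    and outc: "\<And>u. u \<in> D \<Longrightarrow> next_idx l u = None \<Longrightarrow> out l' (\<rho> u) = h (out l u)"
    and combc: "\<And>u x. u \<in> D \<Longrightarrow> next_idx l u \<noteq> None \<Longrightarrow> comb (\<rho> u) (h x) = h (comb u x)"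
    and hsg: "\<And>b. h (sgnv b) = sgnv b"
    and v: "v \<in> D"
  shows "valB l' f' (\<rho> v) = h (valB l f v)"
proof -
  have P: "ps l f v j \<in> D \<and> ps l' f' (\<rho> v) j = \<rho> (ps l f v j)" for j
  proof (induction j)
    case 0 then show ?case using v by simp
  next
    case (Suc j)
    show ?case
    proof (cases "next_idx l (ps l f v j)")
      case None
      then have "next_idx l' (ps l' f' (\<rho> v) j) = None" using Suc stepc by simp
      then show ?thesis using None Suc by (simp add: ps_step)
    next
      case (Some k)
      then have "next_idx l' (ps l' f' (\<rho> v) j) = Some (\<pi> k)" using Suc stepc by simp
      moreover have "f ! (k - 1) \<in> D \<and> f' ! (\<pi> k - 1) = \<rho> (f ! (k - 1))" using succ Suc Some by blast
      ultimately show ?thesis using Some Suc by (simp add: ps_step)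
    qed
  qed
  have fin_eq: "fin l' f' (\<rho> v) \<longleftrightarrow> fin l f v"
    unfolding fin_def using P stepc by simp
  show ?thesis
  proof (cases "fin l f v")
    case False
    have nn: "next_idx l (ps l f v j) \<noteq> None" for j using False by (auto simp: fin_def)
    then have psum_eq: "psum l' f' (\<rho> v) = psum l f v"
      unfolding psum_def[abs_def] using P wtc by simp
    show ?thesis using False fin_eq psum_eq hsg unfolding valB_def by simp
  next
    case True
    then obtain K where K: "next_idx l (ps l f v K) = None" unfolding fin_def by blast
    have "\<And>u. u \<in> D \<Longrightarrow> next_idx l (ps l f u K) = None \<Longrightarrow> valB l' f' (\<rho> u) = h (valB l f u)"
    proof (induction K)
      case 0
      then have "next_idx l u = None" by simp
      moreover then have "next_idx l' (\<rho> u) = None" using stepc 0 by simp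
      ultimately show ?case using 0 outc by (simp add: valB_exit)
    next
      case (Suc K)
      show ?case
      proof (cases "next_idx l u")
        case None
        moreover then have "next_idx l' (\<rho> u) = None" using stepc Suc by simp
        ultimately show ?thesis using Suc outc by (simp add: valB_exit)
      next
        case (Some k)
        have w: "f ! (k - 1) \<in> D" "f' ! (\<pi> k - 1) = \<rho> (f ! (k - 1))" using succ Suc.prems(1) Some by blast+
        have "next_idx l (ps l f (f ! (k - 1)) K) = None" using Suc.prems(2) Some by (simp add: ps_Suc_Some)
        then have IH: "valB l' f' (\<rho> (f ! (k - 1))) = h (valB l f (f ! (k - 1)))" using Suc.IH w(1) by blast
        have "next_idx l' (\<rho> u) = Some (\<pi> k)" using stepc Suc.prems(1) Some by simp
        then have "valB l' f' (\<rho> u) = comb (\<rho> u) (valB l' f' (f' ! (\<pi> k - 1)))" by (rule valB_Some)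
        also have "\<dots> = comb (\<rho> u) (h (valB l f (f ! (k - 1))))" using w(2) IH by simp
        also have "\<dots> = h (comb u (valB l f (f ! (k - 1))))" using combc Suc.prems(1) Some by simp
        also have "\<dots> = h (valB l f u)" using Some by (simp add: valB_Some)
        finally show ?thesis .
      qed
    qed
    then show ?thesis using v K by blast
  qed
qed

lemma Str_length[simp]: "length (Str l f) = length f - l"
  by (simp add: Str_def del: upt_Suc)

lemma Str_nth: "j < length f - l \<Longrightarrow> Str l f ! j = trace_at l f (Suc j)"
  by (simp add: Str_def del: upt_Suc)

lemma Str_nth_valB:
  assumes f: "f \<in> Shom (l + m) (l + n)" and j: "j < m"
  shows "Str l f ! j = valB l f (f ! (l + j))"
proof -
  have "length f = l + m" using ShomD(1)[OF f] .
  then have "Str l f ! j = trace_at l f (Suc j)" using j by (simp add: Str_nth)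
  also have "\<dots> = valB l f (f ! (l + Suc j - 1))" using trace_at_valB[OF f, of "Suc j"] j by simp
  finally show ?thesis by simp
qed

lemma Str_eqI:
  assumes f: "f \<in> Shom (l + m) (l + n)" and g: "length g = m"
    and "\<And>j. j < m \<Longrightarrow> valB l f (f ! (l + j)) = g ! j"
  shows "Str l f = g"
proof (rule nth_equalityI)
  show "length (Str l f) = length g" using ShomD(1)[OF f] g by simp
  fix j assume "j < length (Str l f)"
  then have "j < m" using ShomD(1)[OF f] by simp
  then show "Str l f ! j = g ! j" using Str_nth_valB[OF f] assms(3) by simp
qed

definition G1 :: "tv \<Rightarrow> tv" where
  "G1 u = (case next_idx 1 u of None \<Rightarrow> out 1 u | Some _ \<Rightarrow> sgnv (0 \<le> wt u))"

definition E1 :: "tv \<Rightarrow> tv \<Rightarrow> tv" where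
  "E1 v u = (case next_idx 1 v of None \<Rightarrow> out 1 v | Some _ \<Rightarrow> comb v (G1 u))"

lemma next1_Some: "next_idx 1 v = Some k \<longleftrightarrow> k = 1 \<and> tgt v = Some 1"
  by (auto simp: next_idx_Some)

lemma valB1_G1: "valB 1 f (f ! 0) = G1 (f ! 0)"
proof (cases "next_idx 1 (f ! 0)")
  case None then show ?thesis by (simp add: valB_exit G1_def)
next
  case (Some k)
  then have "k = 1" by (auto simp: next_idx_Some)
  then have "valB 1 f (f ! 0) = sgnv (0 \<le> wt (f ! 0))" using valB_selfloop[OF Some] by simp
  then show ?thesis using Some by (simp add: G1_def)
qed

lemma valB1_E1: "valB 1 f v = E1 v (f ! 0)"
proof (cases "next_idx 1 v")
  case None then show ?thesis by (simp add: valB_exit E1_def)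
next
  case (Some k)
  then have "k = 1" by (auto simp: next_idx_Some)
  have "valB 1 f v = comb v (valB 1 f (f ! (k - 1)))" by (rule valB_Some[OF Some])
  then show ?thesis using Some \<open>k = 1\<close> valB1_G1[of f] by (simp add: E1_def)
qed

lemma tgt_comb[simp]: "tgt (comb v x) = tgt x" by (cases v) simp_all
lemma tgt_out: "tgt (out l v) = map_option (\<lambda>p. p - l) (tgt v)" by (cases v) simp_all
lemma tgt_sgnv[simp]: "tgt (sgnv b) = None" by (simp add: sgnv_def)

lemma in_T_E1:
  assumes "in_T (Suc n) v" "in_T (Suc n) u"
  shows "in_T n (E1 v u)"
proof -
  have G: "in_T n (G1 u)" using assms(2) unfolding G1_def
    by (cases u) (auto simp: sgnv_def)
  show ?thesis using assms(1) G unfolding E1_def in_T_tgt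
    by (cases v) auto
qed

lemma E1_TIdx_D: "E1 v u = TIdx c \<Longrightarrow> in_T (Suc n) v \<Longrightarrow> (v = TIdx (Suc c)) \<or> (v = TIdx 1 \<and> u = TIdx (Suc c))"
  unfolding E1_def G1_def
  by (cases v; cases u) (auto simp: sgnv_def split: if_splits)

lemma E1_tgt_D: "tgt (E1 v u) = Some c \<Longrightarrow> in_T (Suc n) v \<Longrightarrow> in_T (Suc n) u \<Longrightarrow>
    (tgt v = Some (Suc c)) \<or> (tgt v = Some 1 \<and> tgt u = Some (Suc c))"
  unfolding E1_def G1_def
  by (cases v; cases u) (auto simp: sgnv_def split: if_splits)

lemma Str1_nth:
  assumes f: "f \<in> Shom (1 + m) (1 + n)" and j: "j < m"
  shows "Str 1 f ! j = E1 (f ! Suc j) (f ! 0)"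
  using Str_nth_valB[OF f j] valB1_E1 by simp

lemma Str1_Shom:
  assumes f: "f \<in> Shom (1 + m) (1 + n)"
  shows "Str 1 f \<in> Shom m n"
  unfolding Shom_iff
proof (intro conjI allI impI)
  note F = ShomD[OF f]
  show "length (Str 1 f) = m" using F(1) by simp
  have i0: "in_T (Suc n) (f ! 0)" using F(2)[of 0] by simp
  fix i assume i: "i < m"
  show "in_T n (Str 1 f ! i)" using Str1_nth[OF f i] in_T_E1 F(2)[of "Suc i"] i i0 by simp
next
  note F = ShomD[OF f]
  have i0: "in_T (Suc n) (f ! 0)" using F(2)[of 0] by simp
  fix i j c assume ij: "i < m" "j < m" "i \<noteq> j" and e: "Str 1 f ! i = TIdx c"
  have ii: "in_T (Suc n) (f ! Suc i)" "in_T (Suc n) (f ! Suc j)" using F(2) ij by simp_all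
  have ei: "E1 (f ! Suc i) (f ! 0) = TIdx c" using e Str1_nth[OF f ij(1)] by simp
  show "tgt (Str 1 f ! j) \<noteq> Some c"
  proof
    assume "tgt (Str 1 f ! j) = Some c"
    then have ej: "tgt (E1 (f ! Suc j) (f ! 0)) = Some c" using Str1_nth[OF f ij(2)] by simp
    have inj: "\<And>a b k. a < 1 + m \<Longrightarrow> b < 1 + m \<Longrightarrow> a \<noteq> b \<Longrightarrow> f ! a = TIdx k \<Longrightarrow> tgt (f ! b) \<noteq> Some k"
      using F(3) by blast
    from E1_TIdx_D[OF ei ii(1)] E1_tgt_D[OF ej ii(2) i0] show False
      using inj[of "Suc i" "Suc j"] inj[of "Suc i" 0] inj[of 0 "Suc j"] ij by auto
  qed
qed

lemma tle_G1: assumes "tle u u'" shows "tle (G1 u) (G1 u')"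
proof -
  from assms consider "u = u'" | "u = TEx" | "u' = TAll" | r1 r2 i where "u = TW r1 i" "u' = TW r2 i" "r2 \<le> r1"
    unfolding tle_iff by blast
  then show ?thesis
  proof cases
    case 1 then show ?thesis by simp
  next
    case 2 then show ?thesis by (simp add: G1_def)
  next
    case 3 then show ?thesis by (simp add: G1_def)
  next
    case 4
    show ?thesis
    proof (cases "i = 1")
      case True
      then show ?thesis using 4 by (simp add: G1_def sgnv_def)
    next
      case False
      then have "G1 u = TW r1 (i - 1)" "G1 u' = TW r2 (i - 1)" using 4 by (auto simp: G1_def)
      then show ?thesis using 4 by (simp add: tle_iff)
    qed
  qed
qed

lemma tle_comb2: "tle x y \<Longrightarrow> tle (comb v x) (comb v y)"
  by (cases v) (simp_all add: tle_addw)

lemma tle_E1: "tle v v' \<Longrightarrow> tle u u' \<Longrightarrow> tle (E1 v u) (E1 v' u')"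
proof -
  assume vv: "tle v v'" and uu: "tle u u'"
  have G: "tle (G1 u) (G1 u')" using tle_G1[OF uu] .
  from vv consider "v = v'" | "v = TEx" | "v' = TAll" | r1 r2 i where "v = TW r1 i" "v' = TW r2 i" "r2 \<le> r1"
    unfolding tle_iff by blast
  then show ?thesis
  proof cases
    case 1 then show ?thesis using G by (cases "next_idx 1 v") (auto simp: E1_def tle_comb2)
  next
    case 2 then show ?thesis by (simp add: E1_def)
  next
    case 3 then show ?thesis by (simp add: E1_def)
  next
    case 4
    show ?thesis
    proof (cases "next_idx 1 v")
      case None then show ?thesis using 4 by (simp add: E1_def tle_iff)
    next
      case (Some k)
      then have "next_idx 1 v' = Some k" using 4 by simp
      then have "E1 v' u' = addw r2 (G1 u')" using 4 by (simp add: E1_def)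
      moreover have "E1 v u = addw r1 (G1 u)" using 4 Some by (simp add: E1_def)
      moreover have "tle (addw r1 (G1 u)) (addw r2 (G1 u))" using 4 by (simp add: tle_addw_w)
      moreover have "tle (addw r2 (G1 u)) (addw r2 (G1 u'))" using G by (rule tle_addw)
      ultimately show ?thesis using tle_trans by metis
    qed
  qed
qed

lemma Str1_mono:
  assumes f: "f \<in> Shom (1 + m) (1 + n)" and f': "f' \<in> Shom (1 + m) (1 + n)" and le: "hle f f'"
  shows "hle (Str 1 f) (Str 1 f')"
  unfolding hle_iff
proof (intro conjI allI impI)
  show "length (Str 1 f) = length (Str 1 f')" using ShomD(1)[OF f] ShomD(1)[OF f'] by simp
  fix i assume "i < length (Str 1 f)"
  then have i: "i < m" using ShomD(1)[OF f] by simp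
  have l: "length f = 1 + m" using ShomD(1)[OF f] .
  have "tle (f ! Suc i) (f' ! Suc i)" "tle (f ! 0) (f' ! 0)" using le i l unfolding hle_iff by auto
  then show "tle (Str 1 f ! i) (Str 1 f' ! i)" using Str1_nth[OF f i] Str1_nth[OF f' i] tle_E1 by simp
qed


section \<open>Contraction of the first wire\<close>

fun sig :: "(nat \<Rightarrow> tv) \<Rightarrow> nat \<Rightarrow> nat" where
  "sig x 0 = 0"
| "sig x (Suc j) = sig x j + (if tgt (x (sig x j)) = Some 1 then 2 else 1)"

lemma sig_mono: "strict_mono (sig x)"
  unfolding strict_mono_Suc_iff by simp

lemma strict_mono_bracket:
  assumes "strict_mono (s :: nat \<Rightarrow> nat)" "s 0 = 0"
  shows "\<exists>j. s j \<le> N \<and> N < s (Suc j)"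
proof (induction N)
  case 0
  have "s 0 < s (Suc 0)" using assms(1) by (simp add: strict_mono_less)
  then show ?case using assms by (intro exI[of _ 0]) simp
next
  case (Suc N)
  then obtain j where j: "s j \<le> N" "N < s (Suc j)" by blast
  show ?case
  proof (cases "Suc N < s (Suc j)")
    case True then show ?thesis using j by (intro exI[of _ j]) simp
  next
    case False
    then have "Suc N = s (Suc j)" using j by simp
    moreover have "s (Suc j) < s (Suc (Suc j))" using assms(1) by (simp add: strict_mono_def)
    ultimately show ?thesis by (intro exI[of _ "Suc j"]) simp
  qed
qed

lemma ps_selfloop: "next_idx l u = Some k \<Longrightarrow> f ! (k - 1) = u \<Longrightarrow> ps l f u j = u"
  by (induction j) (simp_all add: ps_step)

lemma next_comb[simp]: "next_idx l (comb z x) = next_idx l x" by (cases z) simp_all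

lemma wt_out[simp]: "wt (out l v) = wt v" by (cases v) simp_all
lemma wt_addw: "tgt x \<noteq> None \<Longrightarrow> wt (addw r x) = r + wt x" by (cases x) simp_all
lemma wt_comb: "tgt x \<noteq> None \<Longrightarrow> wt (comb v x) = wt v + wt x" by (cases v) (simp_all add: wt_addw)
lemma comb_out1: "comb (out l v) x = comb v x" by (cases v) simp_all

lemma ps_in:
  assumes "length f \<ge> l"
  shows "ps l f u t \<in> insert u (set f)"
proof (induction t)
  case 0 then show ?case by simp
next
  case (Suc t)
  show ?case
  proof (cases "next_idx l (ps l f u t)")
    case None then show ?thesis using Suc by (simp add: ps_step)
  next
    case (Some k)
    then have "1 \<le> k" "k \<le> l" by (auto simp: next_idx_Some)
    then have "f ! (k - 1) \<in> set f" using assms by simp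
    then show ?thesis using Some by (simp add: ps_step)
  qed
qed

lemma Str1_contract:
  assumes f: "f \<in> Shom (Suc l + m) (Suc l + n)"
  shows "Str (Suc l) f = Str l (Str 1 f)"
proof -
  note F = ShomD[OF f]
  have f1: "f \<in> Shom (1 + (l + m)) (1 + (l + n))" using f by simp
  define g where "g = Str 1 f"
  have g: "g \<in> Shom (l + m) (l + n)" unfolding g_def by (rule Str1_Shom[OF f1])
  define c where "c u = E1 u (f ! 0)" for u
  have g_nth: "g ! (k - 1) = c (f ! k)" if "1 \<le> k" "k \<le> l" for k
  proof -
    have "k - 1 < l + m" using that by simp
    then have "g ! (k - 1) = E1 (f ! Suc (k - 1)) (f ! 0)" unfolding g_def by (rule Str1_nth[OF f1])
    then show ?thesis using that by (simp add: c_def)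
  qed
  have inf0: "in_T (Suc l + n) (f ! k)" if "k < Suc l + m" for k using F(2) that by simp
  have c_exit: "c u = out 1 u" "next_idx l (c u) = None" "out l (c u) = out (Suc l) u"
    if "next_idx (Suc l) u = None" for u
  proof -
    have n1: "next_idx 1 u = None" using that by (cases u) auto
    then show cu: "c u = out 1 u" by (simp add: c_def E1_def)
    show "next_idx l (c u) = None" using that cu by (cases u) (auto split: if_splits)
    show "out l (c u) = out (Suc l) u" using cu by (cases u) auto
  qed
  have c_one: "c u = comb u (G1 (f ! 0))" if "tgt u = Some 1" for u
    using that by (cases u) (auto simp: c_def E1_def)
  have c_k: "c u = out 1 u" "next_idx l (c u) = Some k"
    if "tgt u = Some (Suc k)" "1 \<le> k" "k \<le> l" for u k
  proof -
    show cu: "c u = out 1 u" using that by (cases u) (auto simp: c_def E1_def)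
    show "next_idx l (c u) = Some k" using that cu by (cases u) auto
  qed
  have G1_ex: "G1 (f ! 0) = out 1 (f ! 0)" if "tgt (f ! 0) \<noteq> Some 1" using that
    by (cases "f ! 0") (auto simp: G1_def)
  have G1_loop: "G1 (f ! 0) = sgnv (0 \<le> wt (f ! 0))" if "tgt (f ! 0) = Some 1" using that
    by (cases "f ! 0") (auto simp: G1_def)
  have lenf: "Suc l \<le> length f" using F(1) by simp
  have next_cases: "k = 1 \<or> (\<exists>k'. k = Suc k' \<and> 1 \<le> k' \<and> k' \<le> l)" if "next_idx (Suc l) u = Some k" for u k
  proof -
    have "1 \<le> k" "k \<le> Suc l" using that by (auto simp: next_idx_Some)
    then show ?thesis by (cases k) auto
  qed
  have FIN: "valB (Suc l) f u = valB l g (c u)" if "next_idx (Suc l) (ps (Suc l) f u K) = None" for u K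
    using that
  proof (induction K arbitrary: u)
    case 0
    then have ex: "next_idx (Suc l) u = None" by simp
    then show ?case using c_exit[OF ex] by (simp add: valB_exit)
  next
    case (Suc K)
    show ?case
    proof (cases "next_idx (Suc l) u")
      case None
      then show ?thesis using c_exit[OF None] by (simp add: valB_exit)
    next
      case (Some k)
      have tk: "tgt u = Some k" using Some by (simp add: next_idx_Some)
      have nK: "next_idx (Suc l) (ps (Suc l) f (f ! (k - 1)) K) = None"
        using Suc.prems Some by (simp add: ps_Suc_Some)
      have IH: "valB (Suc l) f (f ! (k - 1)) = valB l g (c (f ! (k - 1)))" using Suc.IH[OF nK] .
      have X: "valB (Suc l) f u = comb u (valB (Suc l) f (f ! (k - 1)))" using valB_Some[OF Some] .
      from next_cases[OF Some] show ?thesis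
      proof
        assume k1: "k = 1"
        have "tgt (f ! 0) \<noteq> Some 1"
        proof
          assume t1: "tgt (f ! 0) = Some 1"
          then have s1: "next_idx (Suc l) (f ! 0) = Some 1" by (simp add: next_idx_Some)
          have "ps (Suc l) f (f ! 0) K = f ! 0" using ps_selfloop[OF s1] by simp
          then show False using nK k1 s1 by simp
        qed
        then have c0: "c (f ! 0) = out 1 (f ! 0)" by (cases "f ! 0") (auto simp: c_def E1_def)
        have cu: "c u = comb u (c (f ! 0))" using c_one[of u] tk k1 G1_ex[OF \<open>tgt (f ! 0) \<noteq> Some 1\<close>] c0 by simp
        have "valB l g (c u) = comb u (valB l g (c (f ! 0)))" using cu by (simp add: valB_comb)
        then show ?thesis using X IH k1 by simp
      next
        assume "\<exists>k'. k = Suc k' \<and> 1 \<le> k' \<and> k' \<le> l"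
        then obtain k' where k': "k = Suc k'" "1 \<le> k'" "k' \<le> l" by blast
        have cu: "c u = out 1 u" "next_idx l (c u) = Some k'" using c_k[of u k'] tk k' by auto
        have "valB l g (c u) = comb (c u) (valB l g (g ! (k' - 1)))" using valB_Some[OF cu(2)] .
        also have "\<dots> = comb u (valB l g (c (f ! k')))" using g_nth[OF k'(2,3)] cu(1) by (simp add: comb_out1)
        finally show ?thesis using X IH k' by simp
      qed
    qed
  qed
  have CL: "valB (Suc l) f u = valB l g (c u)" if uin: "in_T (Suc l + n) u" for u
  proof (cases "fin (Suc l) f u")
    case True
    then obtain K where "next_idx (Suc l) (ps (Suc l) f u K) = None" unfolding fin_def by blast
    then show ?thesis by (rule FIN)
  next
    case nf: False
    define x where "x = ps (Suc l) f u"
    define y where "y = ps l g (c u)"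
    define s where "s = sig x"
    define A where "A z = (tgt z = Some 1 \<and> tgt (f ! 0) = Some 1)" for z
    have nx: "\<exists>k. next_idx (Suc l) (x t) = Some k" for t using nf_next[OF nf] x_def by blast
    have S: "y j = c (x (s j)) \<and> psum l g (c u) j = psum (Suc l) f u (s j) \<and> (\<forall>i<j. next_idx l (y i) \<noteq> None)"
      if "\<forall>i<j. \<not> A (x (s i))" for j
      using that
    proof (induction j)
      case 0 then show ?case by (simp add: y_def s_def x_def psum_def)
    next
      case (Suc j)
      have IH: "y j = c (x (s j))" "psum l g (c u) j = psum (Suc l) f u (s j)" "\<forall>i<j. next_idx l (y i) \<noteq> None"
        using Suc by auto
      define z where "z = x (s j)"
      obtain k where k: "next_idx (Suc l) z = Some k" using nx z_def by blast
      have tz: "tgt z = Some k" using k by (simp add: next_idx_Some)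
      have x1: "x (Suc (s j)) = f ! (k - 1)" using k z_def x_def by (simp add: ps_step)
      have pX1: "psum (Suc l) f u (Suc (s j)) = psum (Suc l) f u (s j) + wt z"
        using z_def x_def by (simp add: psum_Suc)
      from next_cases[OF k] show ?case
      proof
        assume k1: "k = 1"
        have nA: "\<not> A z" using Suc.prems z_def by simp
        then have t0: "tgt (f ! 0) \<noteq> Some 1" using tz k1 A_def by simp
        obtain k2 where k2: "next_idx (Suc l) (x (Suc (s j))) = Some k2" using nx by blast
        then have k2': "next_idx (Suc l) (f ! 0) = Some k2" using x1 k1 by simp
        then have tk2: "tgt (f ! 0) = Some k2" by (simp add: next_idx_Some)
        obtain k'' where k'': "k2 = Suc k''" "1 \<le> k''" "k'' \<le> l" using next_cases[OF k2'] t0 tk2 by auto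
        have x2: "x (Suc (Suc (s j))) = f ! k''" using k2 k'' x_def by (simp add: ps_step)
        have sS: "s (Suc j) = Suc (Suc (s j))" using tz k1 z_def s_def by simp
        have cz: "c z = comb z (out 1 (f ! 0))" using c_one tz k1 G1_ex[OF t0] by simp
        have ncz: "next_idx l (c z) = Some k''" using cz tk2 k'' by (cases "f ! 0") auto
        have yS: "y (Suc j) = g ! (k'' - 1)" using IH(1) z_def ncz y_def by (simp add: ps_step)
        then have yS': "y (Suc j) = c (x (s (Suc j)))" using g_nth[OF k''(2,3)] x2 sS by simp
        have wcz: "wt (c z) = wt z + wt (f ! 0)" using cz tk2 by (simp add: wt_comb tgt_out)
        have "psum l g (c u) (Suc j) = psum l g (c u) j + wt (y j)" by (simp add: psum_Suc y_def)
        also have "\<dots> = psum (Suc l) f u (s j) + wt z + wt (f ! 0)" using IH(1,2) z_def wcz by simp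
        also have "\<dots> = psum (Suc l) f u (s (Suc j))" using sS pX1 x1 k1 x_def by (simp add: psum_Suc)
        finally show ?case using yS' IH(3) IH(1) z_def ncz by (auto simp: less_Suc_eq)
      next
        assume "\<exists>k'. k = Suc k' \<and> 1 \<le> k' \<and> k' \<le> l"
        then obtain k' where k': "k = Suc k'" "1 \<le> k'" "k' \<le> l" by blast
        have sS: "s (Suc j) = Suc (s j)" using tz k' z_def s_def by simp
        have cz: "c z = out 1 z" "next_idx l (c z) = Some k'" using c_k[of z k'] tz k' by auto
        have yS: "y (Suc j) = g ! (k' - 1)" using IH(1) z_def cz y_def by (simp add: ps_step)
        then have yS': "y (Suc j) = c (x (s (Suc j)))" using g_nth[OF k'(2,3)] x1 k' sS by simp
        have "psum l g (c u) (Suc j) = psum l g (c u) j + wt (y j)" by (simp add: psum_Suc y_def)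
        also have "\<dots> = psum (Suc l) f u (s (Suc j))" using IH(1,2) z_def cz sS pX1 by simp
        finally show ?case using yS' IH(3) IH(1) z_def cz by (auto simp: less_Suc_eq)
      qed
    qed
    show ?thesis
    proof (cases "\<exists>j. A (x (s j))")
      case True
      define j1 where "j1 = (LEAST j. A (x (s j)))"
      have Aj1: "A (x (s j1))" unfolding j1_def using True by (metis LeastI)
      have good: "\<forall>i<j1. \<not> A (x (s i))" unfolding j1_def using not_less_Least by blast
      have S1: "y j1 = c (x (s j1))" "\<forall>i<j1. next_idx l (y i) \<noteq> None" using S[OF good] by auto
      define z where "z = x (s j1)"
      have tz: "tgt z = Some 1" and t0: "tgt (f ! 0) = Some 1" using Aj1 z_def A_def by auto
      define b where "b = (0 \<le> wt (f ! 0))"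
      have cz: "c z = sgnv b" using c_one[OF tz] G1_loop[OF t0] b_def by simp
      have "valB l g (c u) = sgnv b"
        using valB_chain[of j1 l g "c u" b] S1 cz z_def y_def by simp
      moreover have "valB (Suc l) f u = sgnv b"
      proof (rule valB_chain[of "s j1"])
        show "\<forall>i<s j1. next_idx (Suc l) (ps (Suc l) f u i) \<noteq> None" using nx x_def by auto
        have s1: "next_idx (Suc l) (f ! 0) = Some 1" using t0 by (simp add: next_idx_Some)
        have "valB (Suc l) f (f ! 0) = sgnv b" using valB_selfloop[OF s1] b_def by simp
        moreover have "next_idx (Suc l) z = Some 1" using tz by (simp add: next_idx_Some)
        ultimately have "valB (Suc l) f z = sgnv b" by (simp add: valB_Some)
        then show "valB (Suc l) f (ps (Suc l) f u (s j1)) = sgnv b" using z_def x_def by simp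
      qed
      ultimately show ?thesis by simp
    next
      case False
      then have allg: "\<forall>i<j. \<not> A (x (s i))" for j by blast
      have SS: "y j = c (x (s j))" "psum l g (c u) j = psum (Suc l) f u (s j)" "next_idx l (y j) \<noteq> None" for j
        using S[OF allg[of j]] S[OF allg[of "Suc j"]] by auto
      have nfY: "\<not> fin l g (c u)" unfolding fin_def using SS(3) y_def by simp
      have smono: "strict_mono s" unfolding s_def by (rule sig_mono)
      have s0: "s 0 = 0" unfolding s_def by simp
      have sstep: "s (Suc j) \<le> Suc (Suc (s j))" for j unfolding s_def by simp
      define Wb where "Wb = Max ((\<lambda>v. \<bar>wt v\<bar>) ` insert u (set f))"
      have Wb: "\<bar>wt (x t)\<bar> \<le> Wb" for t
      proof -
        have "x t \<in> insert u (set f)" unfolding x_def by (rule ps_in[OF lenf])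
        then show ?thesis unfolding Wb_def by (intro Max_ge) auto
      qed
      have "bddb (psum l g (c u)) \<longleftrightarrow> bddb (psum (Suc l) f u)"
      proof
        assume "bddb (psum l g (c u))"
        then obtain B where B: "\<forall>j. B \<le> psum (Suc l) f u (s j)" unfolding bddb_def SS(2) by auto
        have "B - Wb \<le> psum (Suc l) f u N" for N
        proof -
          obtain j where j: "s j \<le> N" "N < s (Suc j)" using strict_mono_bracket[OF smono s0] by blast
          then have "N = s j \<or> N = Suc (s j)" using sstep[of j] by linarith
          then show ?thesis
          proof
            assume "N = s j" then show ?thesis using B Wb[of 0] by (smt (verit))
          next
            assume N: "N = Suc (s j)"
            have "psum (Suc l) f u N = psum (Suc l) f u (s j) + wt (x (s j))" using N x_def by (simp add: psum_Suc)
            then show ?thesis using B Wb[of "s j"] by (smt (verit))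
          qed
        qed
        then show "bddb (psum (Suc l) f u)" unfolding bddb_def by blast
      next
        assume "bddb (psum (Suc l) f u)"
        then obtain B where "\<forall>N. B \<le> psum (Suc l) f u N" unfolding bddb_def by blast
        then show "bddb (psum l g (c u))" unfolding bddb_def SS(2) by blast
      qed
      then show ?thesis using nf nfY unfolding valB_def by simp
    qed
  qed
  show ?thesis
  proof (rule Str_eqI[OF f])
    show "length (Str l (Str 1 f)) = m" using ShomD(1)[OF g] g_def by simp
    fix j assume j: "j < m"
    have "Str l g ! j = valB l g (g ! (l + j))" by (rule Str_nth_valB[OF g j])
    moreover have "g ! (l + j) = c (f ! (Suc l + j))"
      unfolding g_def c_def using Str1_nth[OF f1, of "l + j"] j by simp
    moreover have "in_T (Suc l + n) (f ! (Suc l + j))" using inf0 j by simp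
    ultimately show "valB (Suc l) f (f ! (Suc l + j)) = Str l (Str 1 f) ! j"
      using CL g_def by simp
  qed
qed


section \<open>Iteration and trace axioms\<close>

lemma Str0: assumes f: "f \<in> Shom m n" shows "Str 0 f = f"
proof -
  have f0: "f \<in> Shom (0 + m) (0 + n)" using f by simp
  show ?thesis
  proof (rule Str_eqI[OF f0])
    show "length f = m" using ShomD(1)[OF f] .
    fix j assume "j < m"
    show "valB 0 f (f ! (0 + j)) = f ! j" by (cases "f ! j") (simp_all add: valB_exit)
  qed
qed

lemma Str_Shom:
  assumes "f \<in> Shom (l + m) (l + n)"
  shows "Str l f \<in> Shom m n"
  using assms
proof (induction l arbitrary: f)
  case 0 then show ?case using Str0[of f m n] by simp
next
  case (Suc l)
  have f1: "f \<in> Shom (1 + (l + m)) (1 + (l + n))" using Suc.prems by simp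
  have g: "Str 1 f \<in> Shom (l + m) (l + n)" by (rule Str1_Shom[OF f1])
  have "Str (Suc l) f = Str l (Str 1 f)" by (rule Str1_contract[OF Suc.prems])
  then show ?case using Suc.IH[OF g] by simp
qed

lemma valB_same:
  assumes "\<And>u k. u \<in> D \<Longrightarrow> next_idx l u = Some k \<Longrightarrow> f ! (k - 1) \<in> D \<and> f' ! (k - 1) = f ! (k - 1)"
    and "v \<in> D"
  shows "valB l f' v = valB l f v"
  using valB_corr[of D l "\<lambda>u. u" id l f f' "\<lambda>x. x" v] assms by (simp add: option.map_id)

lemma Str_mono:
  assumes "f \<in> Shom (l + m) (l + n)" "f' \<in> Shom (l + m) (l + n)" "hle f f'"
  shows "hle (Str l f) (Str l f')"
  using assms
proof (induction l arbitrary: f f')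
  case 0 then show ?case using Str0[of f m n] Str0[of f' m n] by simp
next
  case (Suc l)
  have f1: "f \<in> Shom (1 + (l + m)) (1 + (l + n))" "f' \<in> Shom (1 + (l + m)) (1 + (l + n))" using Suc.prems by simp_all
  have "hle (Str 1 f) (Str 1 f')" by (rule Str1_mono[OF f1 Suc.prems(3)])
  then have "hle (Str l (Str 1 f)) (Str l (Str 1 f'))"
    using Suc.IH Str1_Shom[OF f1(1)] Str1_Shom[OF f1(2)] by blast
  then show ?case using Str1_contract[OF Suc.prems(1)] Str1_contract[OF Suc.prems(2)] by simp
qed

lemma Str_vanish:
  assumes "f \<in> Shom (l + l' + m) (l + l' + n)"
  shows "Str (l + l') f = Str l' (Str l f)"
  using assms
proof (induction l arbitrary: f)
  case 0
  have "f \<in> Shom (l' + m) (l' + n)" using 0 by simp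
  then show ?case using Str0 by simp
next
  case (Suc l)
  have fa: "f \<in> Shom (Suc (l + l') + m) (Suc (l + l') + n)" using Suc.prems by simp
  have fb: "f \<in> Shom (Suc l + (l' + m)) (Suc l + (l' + n))" using Suc.prems by (simp add: add.assoc)
  have f1: "f \<in> Shom (1 + (l + l' + m)) (1 + (l + l' + n))" using Suc.prems by simp
  have g: "Str 1 f \<in> Shom (l + l' + m) (l + l' + n)" by (rule Str1_Shom[OF f1])
  have "Str (Suc l + l') f = Str (l + l') (Str 1 f)" using Str1_contract[OF fa] by simp
  also have "\<dots> = Str l' (Str l (Str 1 f))" by (rule Suc.IH[OF g])
  also have "Str l (Str 1 f) = Str (Suc l) f" using Str1_contract[OF fb] by simp
  finally show ?case .
qed

lemma Str_yank: "Str l (Ssym l l) = Sid l"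
proof (rule Str_eqI[OF Ssym_Shom])
  show "length (Sid l) = l" by simp
  fix j assume j: "j < l"
  have e1: "Ssym l l ! (l + j) = TIdx (Suc j)" using j by (simp add: Ssym_nth)
  have e2: "Ssym l l ! j = TIdx (l + Suc j)" using j by (simp add: Ssym_nth)
  have n1: "next_idx l (TIdx (Suc j)) = Some (Suc j)" using j by simp
  have "valB l (Ssym l l) (TIdx (Suc j)) = valB l (Ssym l l) (TIdx (l + Suc j))"
    using valB_Some[OF n1] e2 by simp
  also have "\<dots> = TIdx (Suc j)" by (simp add: valB_exit)
  finally show "valB l (Ssym l l) (Ssym l l ! (l + j)) = Sid l ! j" using e1 j by simp
qed

lemma out_tshift: "(\<forall>k. tgt v = Some k \<longrightarrow> 1 \<le> k) \<Longrightarrow> out l (tshift (l + n) v) = tshift n v"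
  by (cases v) auto

lemma Str_super:
  assumes f: "f \<in> Shom (l + m) (l + n)" and g: "g \<in> Shom m' n'"
  shows "Str l (Stens (l + n) f g) = Stens n (Str l f) g"
proof -
  note F = ShomD[OF f] and G = ShomD[OF g]
  have F': "Stens (l + n) f g \<in> Shom (l + (m + m')) (l + (n + n'))"
    using Stens_Shom[OF f g] by (simp add: add.assoc)
  define D where "D = {u. in_T (l + n) u}"
  have corr: "valB l (Stens (l + n) f g) u = valB l f u" if "u \<in> D" for u
  proof (rule valB_same[OF _ that])
    fix u k assume u: "u \<in> D" "next_idx l u = Some k"
    then have "1 \<le> k" "k \<le> l" by (auto simp: next_idx_Some)
    then show "f ! (k - 1) \<in> D \<and> Stens (l + n) f g ! (k - 1) = f ! (k - 1)"
      using F unfolding D_def by simp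
  qed
  show ?thesis
  proof (rule Str_eqI[OF F'])
    show "length (Stens n (Str l f) g) = m + m'" using F G by simp
    fix j assume j: "j < m + m'"
    show "valB l (Stens (l + n) f g) (Stens (l + n) f g ! (l + j)) = Stens n (Str l f) g ! j"
    proof (cases "j < m")
      case True
      have "Stens (l + n) f g ! (l + j) = f ! (l + j)" using True F by simp
      moreover have "f ! (l + j) \<in> D" using F(2) True D_def by simp
      ultimately show ?thesis using corr True Str_nth_valB[OF f True] F by simp
    next
      case False
      have e: "Stens (l + n) f g ! (l + j) = tshift (l + n) (g ! (j - m))" using False j F G by simp
      have gi: "in_T n' (g ! (j - m))" using G(2) False j by simp
      then have nx: "next_idx l (tshift (l + n) (g ! (j - m))) = None" by (cases "g ! (j - m)") auto
      have "out l (tshift (l + n) (g ! (j - m))) = tshift n (g ! (j - m))"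
        using gi by (intro out_tshift) (auto simp: in_T_tgt)
      then show ?thesis using e nx False j F G by (simp add: valB_exit)
    qed
  qed
qed

lemma ap_sgnv[simp]: "ap (sgnv b) h = sgnv b" by (simp add: sgnv_def)

lemma Str_tight:
  assumes f: "f \<in> Shom (l + m) (l + n)" and g: "g \<in> Shom m' m" and h: "h \<in> Shom n n'"
  shows "Str l (Scomp (Scomp (Stens l (Sid l) g) f) (Stens l (Sid l) h)) = Scomp (Scomp g (Str l f)) h"
proof -
  note F = ShomD[OF f] and G = ShomD[OF g] and H = ShomD[OF h]
  define In where "In = Stens l (Sid l) g"
  define Ou where "Ou = Stens l (Sid l) h"
  define F' where "F' = Scomp (Scomp In f) Ou"
  have In: "In \<in> Shom (l + m') (l + m)" unfolding In_def using Stens_Shom[OF Sid_Shom g] .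
  have Ou: "Ou \<in> Shom (l + n) (l + n')" unfolding Ou_def using Stens_Shom[OF Sid_Shom h] .
  have F': "F' \<in> Shom (l + m') (l + n')" unfolding F'_def using Scomp_Shom[OF Scomp_Shom[OF In f] Ou] .
  define D where "D = {u. in_T (l + n) u}"
  have O1: "Ou ! (t - 1) = TIdx t" if "1 \<le> t" "t \<le> l" for t using that unfolding Ou_def by simp
  have O2: "Ou ! (t - 1) = tshift l (h ! (t - l - 1))" if "l < t" "t \<le> l + n" for t
    using that H unfolding Ou_def by simp
  have A1: "ap u Ou = u" if "next_idx l u = Some k" for u k
    using that O1 by (cases u) (auto split: if_splits)
  have A2: "next_idx l (ap u Ou) = None \<and> out l (ap u Ou) = ap (out l u) h"
    if "u \<in> D" "next_idx l u = None" for u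
  proof (cases u)
    case (TIdx t)
    then have t: "l < t" "t \<le> l + n" using that D_def by (auto split: if_splits)
    have hi: "in_T n' (h ! (t - l - 1))" using H(2) t by simp
    have "ap u Ou = tshift l (h ! (t - l - 1))" using TIdx O2[OF t] by simp
    moreover have "next_idx l (tshift l (h ! (t - l - 1))) = None" using hi by (cases "h ! (t - l - 1)") auto
    moreover have "out l (tshift l (h ! (t - l - 1))) = h ! (t - l - 1)"
      using out_tshift[of "h ! (t - l - 1)" l 0] hi by (auto simp: in_T_tgt)
    moreover have "ap (out l u) h = h ! (t - l - 1)" using TIdx by simp
    ultimately show ?thesis by simp
  next
    case (TW r t)
    then have t: "l < t" "t \<le> l + n" using that D_def by (auto split: if_splits)
    have hi: "in_T n' (h ! (t - l - 1))" using H(2) t by simp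
    have "ap u Ou = addw r (tshift l (h ! (t - l - 1)))" using TW O2[OF t] by simp
    moreover have "next_idx l (tshift l (h ! (t - l - 1))) = None" using hi by (cases "h ! (t - l - 1)") auto
    moreover have "out l (tshift l (h ! (t - l - 1))) = h ! (t - l - 1)"
      using out_tshift[of "h ! (t - l - 1)" l 0] hi by (auto simp: in_T_tgt)
    moreover have "ap (out l u) h = addw r (h ! (t - l - 1))" using TW by simp
    ultimately show ?thesis by (simp add: out_addw)
  qed simp_all
  have corr: "valB l F' (ap u Ou) = ap (valB l f u) h" if "u \<in> D" for u
  proof (rule valB_corr[of D l "\<lambda>u. ap u Ou" id l f F' "\<lambda>x. ap x h" u, OF _ _ _ _ _ _ that])
    fix u assume u: "u \<in> D"
    show "next_idx l (ap u Ou) = map_option id (next_idx l u)"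
      using A1 A2[OF u] by (cases "next_idx l u") (auto simp: option.map_id)
  next
    fix u k assume u: "u \<in> D" and k: "next_idx l u = Some k"
    then have k1: "1 \<le> k" "k \<le> l" by (auto simp: next_idx_Some)
    have "f ! (k - 1) \<in> D" using F(2)[of "k - 1"] k1 D_def by simp
    moreover have "In ! (k - 1) = TIdx k" using k1 unfolding In_def by simp
    then have "F' ! (id k - 1) = ap (f ! (k - 1)) Ou" using k1 F In unfolding F'_def by (simp add: ShomD(1)[OF In])
    ultimately show "f ! (k - 1) \<in> D \<and> F' ! (id k - 1) = ap (f ! (k - 1)) Ou" by simp
  next
    fix u assume "u \<in> D" "next_idx l u \<noteq> None"
    then show "wt (ap u Ou) = wt u" using A1 by auto
  next
    fix u assume "u \<in> D" "next_idx l u = None"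
    then show "out l (ap u Ou) = ap (out l u) h" using A2 by blast
  next
    fix u x assume "u \<in> D" "next_idx l u \<noteq> None"
    then have "ap u Ou = u" using A1 by auto
    then show "comb (ap u Ou) (ap x h) = ap (comb u x) h" by (cases u) (simp_all add: ap_addw)
  next
    fix b show "ap (sgnv b) h = sgnv b" by simp
  qed
  show ?thesis
    unfolding F'_def[symmetric] Ou_def[symmetric] In_def[symmetric]
  proof (rule Str_eqI[OF F'])
    show "length (Scomp (Scomp g (Str l f)) h) = m'" using G by simp
    fix j assume j: "j < m'"
    have Ij: "In ! (l + j) = tshift l (g ! j)" using j G unfolding In_def by simp
    have F'j: "F' ! (l + j) = ap (ap (tshift l (g ! j)) f) Ou"
      using Ij j ShomD(1)[OF In] unfolding F'_def by simp
    have gj: "in_T m (g ! j)" using G(2) j by simp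
    have RHS: "Scomp (Scomp g (Str l f)) h ! j = ap (ap (g ! j) (Str l f)) h" using j G by simp
    show "valB l F' (F' ! (l + j)) = Scomp (Scomp g (Str l f)) h ! j"
      unfolding RHS F'j
    proof (cases "g ! j")
      case (TIdx a)
      then have a: "1 \<le> a" "a \<le> m" using gj by auto
      have w: "f ! (l + a - 1) \<in> D" using F(2)[of "l + a - 1"] a D_def by simp
      have "Str l f ! (a - 1) = valB l f (f ! (l + (a - 1)))" using Str_nth_valB[OF f] a by simp
      then show "valB l F' (ap (ap (tshift l (g ! j)) f) Ou) = ap (ap (g ! j) (Str l f)) h"
        using TIdx corr[OF w] a by simp
    next
      case (TW r a)
      then have a: "1 \<le> a" "a \<le> m" using gj by auto
      have w: "f ! (l + a - 1) \<in> D" using F(2)[of "l + a - 1"] a D_def by simp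
      have "Str l f ! (a - 1) = valB l f (f ! (l + (a - 1)))" using Str_nth_valB[OF f] a by simp
      then show "valB l F' (ap (ap (tshift l (g ! j)) f) Ou) = ap (ap (g ! j) (Str l f)) h"
        using TW corr[OF w] a by (simp add: ap_addw valB_addw)
    qed (simp_all add: valB_exit)
  qed
qed


section \<open>Sliding\<close>

definition rtg :: "nat \<Rightarrow> nat \<Rightarrow> tv \<Rightarrow> tv" where
  "rtg l' l v = (case v of TIdx t \<Rightarrow> TIdx (if t \<le> l' then t else t + l)
                         | TW r t \<Rightarrow> TW r (if t \<le> l' then t else t + l) | x \<Rightarrow> x)"

definition swp :: "nat \<Rightarrow> nat \<Rightarrow> nat \<Rightarrow> nat" where
  "swp l' l t = (if 1 \<le> t \<and> t \<le> l' then l + t else if l' < t \<and> t \<le> l' + l then t - l' else t)"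

definition rnm :: "(nat \<Rightarrow> nat) \<Rightarrow> tv \<Rightarrow> tv" where
  "rnm p v = (case v of TIdx t \<Rightarrow> TIdx (p t) | TW r t \<Rightarrow> TW r (p t) | x \<Rightarrow> x)"

lemma rnm_simps[simp]: "rnm p (TIdx t) = TIdx (p t)" "rnm p (TW r t) = TW r (p t)" "rnm p TEx = TEx" "rnm p TAll = TAll"
  by (simp_all add: rnm_def)

lemma rtg_simps[simp]: "rtg l' l (TIdx t) = TIdx (if t \<le> l' then t else t + l)"
  "rtg l' l (TW r t) = TW r (if t \<le> l' then t else t + l)" "rtg l' l TEx = TEx" "rtg l' l TAll = TAll"
  by (simp_all add: rtg_def)

lemma rnm_rtg: "in_T (l' + n) v \<Longrightarrow> rnm (swp l' l) (rtg l' l v) = tshift l v"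
  by (cases v) (auto simp: swp_def)

lemma rnm_tshift: "in_T l w \<Longrightarrow> rnm (swp l' l) (tshift l' w) = w"
  by (cases w) (auto simp: swp_def)

lemma out_tshift0: "in_T n w \<Longrightarrow> out l (tshift l w) = w"
  by (cases w) auto

lemma next_tshift0: "in_T n w \<Longrightarrow> next_idx l (tshift l w) = None"
  by (cases w) auto

lemma Str_slide:
  assumes f: "f \<in> Shom (l + m) (l' + n)" and g: "g \<in> Shom l' l"
  shows "Str l (Scomp f (Stens l g (Sid n))) = Str l' (Scomp (Stens l g (Sid m)) f)"
proof -
  note F = ShomD[OF f] and G = ShomD[OF g]
  define S2 where "S2 = Stens (l' + l) (Ssym l l') (Sid n)"
  define H where "H = Scomp (Stens l g f) S2"
  define Pin where "Pin = Stens (l' + l) (Ssym l l') (Sid m)"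
  define H' where "H' = Scomp Pin (Stens l g f)"
  have gf: "Stens l g f \<in> Shom (l' + (l + m)) (l + (l' + n))" by (rule Stens_Shom[OF g f])
  have S2: "S2 \<in> Shom (l + (l' + n)) (l' + l + n)"
    unfolding S2_def using Stens_Shom[OF Ssym_Shom[of l l'] Sid_Shom[of n]] by (simp add: add.assoc)
  have Hs: "H \<in> Shom (l' + (l + m)) (l' + l + n)" unfolding H_def by (rule Scomp_Shom[OF gf S2])
  have Pin: "Pin \<in> Shom (l + l' + m) (l' + (l + m))"
    unfolding Pin_def using Stens_Shom[OF Ssym_Shom[of l l'] Sid_Shom[of m]] by (simp add: add.assoc add.commute add.left_commute)
  have H's: "H' \<in> Shom (l + l' + m) (l + (l' + n))" unfolding H'_def by (rule Scomp_Shom[OF Pin gf])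
  have Hn1: "H ! k = tshift l' (g ! k)" if k: "k < l'" for k
  proof -
    have gk: "in_T l (g ! k)" using G(2) k .
    have "H ! k = ap (g ! k) S2" unfolding H_def using k G F by simp
    also have "\<dots> = tshift l' (g ! k)" using gk unfolding S2_def
      by (cases "g ! k") (auto simp: Ssym_nth)
    finally show ?thesis .
  qed
  have Hn2: "H ! (l' + j) = rtg l' l (f ! j)" if j: "j < l + m" for j
  proof -
    have fj: "in_T (l' + n) (f ! j)" using F(2) j .
    have "H ! (l' + j) = ap (tshift l (f ! j)) S2" unfolding H_def using j G F by simp
    also have "\<dots> = rtg l' l (f ! j)" using fj unfolding S2_def
      by (cases "f ! j") (auto simp: Ssym_nth nth_append)
    finally show ?thesis .
  qed
  have H'n1: "H' ! i = tshift l (f ! i)" if i: "i < l" for i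
  proof -
    have "Pin ! i = TIdx (l' + Suc i)" using i unfolding Pin_def by (simp add: Ssym_nth)
    then show ?thesis unfolding H'_def using i F G ShomD(1)[OF Pin] by simp
  qed
  have H'n2: "H' ! (l + k) = g ! k" if k: "k < l'" for k
  proof -
    have "Pin ! (l + k) = TIdx (Suc k)" using k unfolding Pin_def by (simp add: Ssym_nth)
    then show ?thesis unfolding H'_def using k F G ShomD(1)[OF Pin] by simp
  qed
  have H'n3: "H' ! (l + l' + j) = tshift l (f ! (l + j))" if j: "j < m" for j
  proof -
    have "Pin ! (l + l' + j) = TIdx (l' + l + Suc j)" using j unfolding Pin_def by simp
    then show ?thesis unfolding H'_def using j F G ShomD(1)[OF Pin] by (simp add: add.commute add.left_commute)
  qed
  have Hs2: "H \<in> Shom (l' + (l + m)) (l' + (l + n))" using Hs by (simp add: add.assoc)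
  have E2: "Str l' H = Scomp f (Stens l g (Sid n))"
  proof (rule Str_eqI[OF Hs2])
    show "length (Scomp f (Stens l g (Sid n))) = l + m" using F by simp
    fix j assume j: "j < l + m"
    have fj: "in_T (l' + n) (f ! j)" using F(2) j .
    have R: "Scomp f (Stens l g (Sid n)) ! j = ap (f ! j) (Stens l g (Sid n))" using j F by simp
    show "valB l' H (H ! (l' + j)) = Scomp f (Stens l g (Sid n)) ! j"
      unfolding R Hn2[OF j]
    proof (cases "f ! j")
      case (TIdx t)
      show "valB l' H (rtg l' l (f ! j)) = ap (f ! j) (Stens l g (Sid n))"
      proof (cases "t \<le> l'")
        case True
        then have t: "1 \<le> t" "t \<le> l'" using fj TIdx by auto
        have gt: "in_T l (g ! (t - 1))" using G(2) t by simp
        have "valB l' H (rtg l' l (f ! j)) = valB l' H (H ! (t - 1))" using TIdx t by (simp add: valB_Some)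
        also have "\<dots> = g ! (t - 1)" using Hn1[of "t - 1"] t gt by (simp add: valB_exit next_tshift0 out_tshift0)
        finally show ?thesis using TIdx t G by simp
      next
        case False
        then have t: "l' < t" "t \<le> l' + n" using fj TIdx by auto
        then show ?thesis using TIdx G by (simp add: valB_exit)
      qed
    next
      case (TW r t)
      show "valB l' H (rtg l' l (f ! j)) = ap (f ! j) (Stens l g (Sid n))"
      proof (cases "t \<le> l'")
        case True
        then have t: "1 \<le> t" "t \<le> l'" using fj TW by auto
        have gt: "in_T l (g ! (t - 1))" using G(2) t by simp
        have "valB l' H (rtg l' l (f ! j)) = addw r (valB l' H (H ! (t - 1)))" using TW t by (simp add: valB_Some)
        also have "valB l' H (H ! (t - 1)) = g ! (t - 1)" using Hn1[of "t - 1"] t gt by (simp add: valB_exit next_tshift0 out_tshift0)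
        finally show ?thesis using TW t G by simp
      next
        case False
        then have t: "l' < t" "t \<le> l' + n" using fj TW by auto
        then show ?thesis using TW G by (simp add: valB_exit)
      qed
    qed (simp_all add: valB_exit)
  qed
  have H's3: "H' \<in> Shom (l + (l' + m)) (l + (l' + n))" using H's by (simp add: add.assoc)
  have E3: "Str l H' = Scomp (Stens l g (Sid m)) f"
  proof (rule Str_eqI[OF H's3])
    show "length (Scomp (Stens l g (Sid m)) f) = l' + m" using G by simp
    fix j assume j: "j < l' + m"
    have R: "Scomp (Stens l g (Sid m)) f ! j = ap (Stens l g (Sid m) ! j) f" using j G by simp
    show "valB l H' (H' ! (l + j)) = Scomp (Stens l g (Sid m)) f ! j"
      unfolding R
    proof (cases "j < l'")
      case True
      have gj: "in_T l (g ! j)" using G(2) True .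
      have e: "H' ! (l + j) = g ! j" "Stens l g (Sid m) ! j = g ! j" using H'n2[OF True] True G by simp_all
      have fin: "valB l H' (H' ! (t - 1)) = f ! (t - 1)" if t: "1 \<le> t" "t \<le> l" for t
      proof -
        have ft: "in_T (l' + n) (f ! (t - 1))" using F(2) t by simp
        then show ?thesis using H'n1[of "t - 1"] t by (simp add: valB_exit next_tshift0 out_tshift0)
      qed
      show "valB l H' (H' ! (l + j)) = ap (Stens l g (Sid m) ! j) f"
        unfolding e using gj fin by (cases "g ! j") (auto simp: valB_Some valB_exit)
    next
      case False
      then have j': "j - l' < m" using j by simp
      have e: "H' ! (l + j) = tshift l (f ! (l + (j - l')))" using H'n3[OF j'] False by simp
      have fj: "in_T (l' + n) (f ! (l + (j - l')))" using F(2) j' by simp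
      have "Stens l g (Sid m) ! j = TIdx (l + Suc (j - l'))" using False j G by simp
      then show "valB l H' (H' ! (l + j)) = ap (Stens l g (Sid m) ! j) f"
        using e fj by (simp add: valB_exit next_tshift0 out_tshift0)
    qed
  qed
  have Hs4: "H \<in> Shom (l' + l + m) (l' + l + n)" using Hs by (simp add: add.assoc)
  have H's4: "H' \<in> Shom (l + l' + m) (l + l' + n)" using H's by (simp add: add.assoc)
  have Lc: "l + l' = l' + l" by simp
  have corr: "valB (l + l') H' (rnm (swp l' l) v) = valB (l' + l) H v" for v
  proof (rule valB_corr[of UNIV "l + l'" "rnm (swp l' l)" "swp l' l" "l' + l" H H' "\<lambda>x. x" v, simplified])
    fix u
    show "next_idx (l + l') (rnm (swp l' l) u) = map_option (swp l' l) (next_idx (l' + l) u)"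
      by (cases u) (auto simp: swp_def)
  next
    fix u k assume k: "next_idx (l' + l) u = Some k"
    then have k1: "1 \<le> k" "k \<le> l' + l" by (auto simp: next_idx_Some)
    show "H' ! (swp l' l k - Suc 0) = rnm (swp l' l) (H ! (k - Suc 0))"
    proof (cases "k \<le> l'")
      case True
      have gk: "in_T l (g ! (k - 1))" using G(2) True k1 by simp
      have "swp l' l k - 1 = l + (k - 1)" using True k1 by (simp add: swp_def)
      then show ?thesis using H'n2[of "k - 1"] Hn1[of "k - 1"] True k1 rnm_tshift[OF gk] by simp
    next
      case False
      have fk: "in_T (l' + n) (f ! (k - l' - 1))" using F(2) False k1 by simp
      have s: "swp l' l k - 1 = k - l' - 1" using False k1 by (simp add: swp_def)
      have "H ! (k - 1) = rtg l' l (f ! (k - l' - 1))" using Hn2[of "k - l' - 1"] False k1 by simp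
      then show ?thesis using H'n1[of "k - l' - 1"] s False k1 rnm_rtg[OF fk] by simp
    qed
  next
    fix u show "wt (rnm (swp l' l) u) = wt u" by (cases u) simp_all
  next
    fix u assume "next_idx (l' + l) u = None"
    then show "out (l + l') (rnm (swp l' l) u) = out (l' + l) u" by (cases u) (auto simp: swp_def split: if_splits)
  next
    fix u x show "comb (rnm (swp l' l) u) x = comb u x" by (cases u) simp_all
  qed
  have E4: "Str (l + l') H' = Str (l' + l) H"
  proof (rule Str_eqI[OF H's4])
    show "length (Str (l' + l) H) = m" using ShomD(1)[OF Hs4] by simp
    fix j assume j: "j < m"
    have fj: "in_T (l' + n) (f ! (l + j))" using F(2) j by simp
    have "H ! (l' + l + j) = rtg l' l (f ! (l + j))" using Hn2[of "l + j"] j by (simp add: add.assoc)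
    then have "H' ! (l + l' + j) = rnm (swp l' l) (H ! (l' + l + j))"
      using H'n3[OF j] rnm_rtg[OF fj] by simp
    then show "valB (l + l') H' (H' ! (l + l' + j)) = Str (l' + l) H ! j"
      using corr Str_nth_valB[OF Hs4 j] by simp
  qed
  have "Str l (Scomp f (Stens l g (Sid n))) = Str l (Str l' H)" using E2 by simp
  also have "\<dots> = Str (l' + l) H" using Str_vanish[OF Hs4] by simp
  also have "\<dots> = Str (l + l') H'" using E4 by simp
  also have "\<dots> = Str l' (Str l H')" using Str_vanish[OF H's4] by simp
  also have "\<dots> = Str l' (Scomp (Stens l g (Sid m)) f)" using E3 by simp
  finally show ?thesis .
qed


section \<open>M-level\<close>

lemma Mhom_iff: "S \<in> Mhom m n \<longleftrightarrow> S \<subseteq> Shom m n \<and> finite S \<and> S \<noteq> {} \<and> antichain_h S"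
  by (simp add: Mhom_def)

lemma maxel_Mhom: "finite A \<Longrightarrow> A \<noteq> {} \<Longrightarrow> A \<subseteq> Shom m n \<Longrightarrow> maxel A \<in> Mhom m n"
  unfolding Mhom_iff using maxel_sub maxel_finite maxel_nonempty maxel_antichain by blast

lemma fin2: "finite A \<Longrightarrow> finite B \<Longrightarrow> finite {\<phi> a b | a b. a \<in> A \<and> b \<in> B}"
  by (simp add: set2_image)

lemma ne2: "A \<noteq> {} \<Longrightarrow> B \<noteq> {} \<Longrightarrow> {\<phi> a b | a b. a \<in> A \<and> b \<in> B} \<noteq> {}"
  by blast

lemma Scomp_sub: "A \<subseteq> Shom m n \<Longrightarrow> B \<subseteq> Shom n p \<Longrightarrow> {Scomp a b | a b. a \<in> A \<and> b \<in> B} \<subseteq> Shom m p"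
  using Scomp_Shom by blast

lemma Stens_sub: "A \<subseteq> Shom m n \<Longrightarrow> B \<subseteq> Shom m' n' \<Longrightarrow> {Stens n a b | a b. a \<in> A \<and> b \<in> B} \<subseteq> Shom (m + m') (n + n')"
  using Stens_Shom by blast

lemma Scomp_mono_l: "a \<in> Shom m n \<Longrightarrow> a' \<in> Shom m n \<Longrightarrow> b \<in> Shom n p \<Longrightarrow> hle a a' \<Longrightarrow> hle (Scomp a b) (Scomp a' b)"
  using Scomp_mono[of a a' b b m n] ShomD(1) by simp

lemma Scomp_mono_r: "a \<in> Shom m n \<Longrightarrow> b \<in> Shom n p \<Longrightarrow> b' \<in> Shom n p \<Longrightarrow> hle b b' \<Longrightarrow> hle (Scomp a b) (Scomp a b')"
  using Scomp_mono[of a a b b' m n] ShomD(1) by simp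

lemma Mcomp_left: "finite A \<Longrightarrow> finite B \<Longrightarrow> A \<subseteq> Shom m n \<Longrightarrow> B \<subseteq> Shom n p \<Longrightarrow>
   maxel {Scomp a b | a b. a \<in> maxel A \<and> b \<in> B} = maxel {Scomp a b | a b. a \<in> A \<and> b \<in> B}"
  by (rule maxel2_left) (auto intro: Scomp_mono_l)

lemma Mcomp_right: "finite A \<Longrightarrow> finite B \<Longrightarrow> A \<subseteq> Shom m n \<Longrightarrow> B \<subseteq> Shom n p \<Longrightarrow>
   maxel {Scomp a b | a b. a \<in> A \<and> b \<in> maxel B} = maxel {Scomp a b | a b. a \<in> A \<and> b \<in> B}"
  by (rule maxel2_right) (auto intro: Scomp_mono_r)

lemma Mtens_left: "finite A \<Longrightarrow> finite B \<Longrightarrow>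
   maxel {Stens n a b | a b. a \<in> maxel A \<and> b \<in> B} = maxel {Stens n a b | a b. a \<in> A \<and> b \<in> B}"
  by (rule maxel2_left) (auto intro: Stens_mono)

lemma Mtens_right: "finite A \<Longrightarrow> finite B \<Longrightarrow>
   maxel {Stens n a b | a b. a \<in> A \<and> b \<in> maxel B} = maxel {Stens n a b | a b. a \<in> A \<and> b \<in> B}"
  by (rule maxel2_right) (auto intro: Stens_mono)

lemma set3_eq:
  assumes "\<And>a b c. a \<in> A \<Longrightarrow> b \<in> B \<Longrightarrow> c \<in> C \<Longrightarrow> \<phi> (\<psi> a b) c = \<chi> a (\<theta> b c)"
  shows "{\<phi> x c | x c. x \<in> {\<psi> a b | a b. a \<in> A \<and> b \<in> B} \<and> c \<in> C}
       = {\<chi> a y | a y. a \<in> A \<and> y \<in> {\<theta> b c | b c. b \<in> B \<and> c \<in> C}}"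
proof (intro equalityI subsetI)
  fix z assume "z \<in> {\<phi> x c | x c. x \<in> {\<psi> a b | a b. a \<in> A \<and> b \<in> B} \<and> c \<in> C}"
  then obtain a b c where abc: "a \<in> A" "b \<in> B" "c \<in> C" "z = \<phi> (\<psi> a b) c" by blast
  then have "z = \<chi> a (\<theta> b c)" using assms by simp
  then show "z \<in> {\<chi> a y | a y. a \<in> A \<and> y \<in> {\<theta> b c | b c. b \<in> B \<and> c \<in> C}}" using abc by blast
next
  fix z assume "z \<in> {\<chi> a y | a y. a \<in> A \<and> y \<in> {\<theta> b c | b c. b \<in> B \<and> c \<in> C}}"
  then obtain a b c where abc: "a \<in> A" "b \<in> B" "c \<in> C" "z = \<chi> a (\<theta> b c)" by blast
  then have "z = \<phi> (\<psi> a b) c" using assms by simp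
  then show "z \<in> {\<phi> x c | x c. x \<in> {\<psi> a b | a b. a \<in> A \<and> b \<in> B} \<and> c \<in> C}" using abc by blast
qed

lemma M_comp_closed: "S \<in> Mhom m n \<Longrightarrow> T \<in> Mhom n p \<Longrightarrow> Mcomp S T \<in> Mhom m p"
  unfolding Mcomp_def Mhom_iff
  by (intro maxel_Mhom[unfolded Mhom_iff] fin2 ne2 Scomp_sub) auto

lemma M_id_closed: "Mid m \<in> Mhom m m"
  unfolding Mid_def Mhom_iff antichain_h_def using Sid_Shom by auto

lemma M_id_left: "S \<in> Mhom m n \<Longrightarrow> Mcomp (Mid m) S = S"
proof -
  assume S: "S \<in> Mhom m n"
  have "{Scomp f g | f g. f \<in> Mid m \<and> g \<in> S} = S"
    using S unfolding Mid_def Mhom_iff by (force simp: Scomp_Sid_left dest: ShomD(1))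
  then show ?thesis using S unfolding Mcomp_def Mhom_iff by (simp add: maxel_antichain_id)
qed

lemma M_id_right: "S \<in> Mhom m n \<Longrightarrow> Mcomp S (Mid n) = S"
proof -
  assume S: "S \<in> Mhom m n"
  have "{Scomp f g | f g. f \<in> S \<and> g \<in> Mid n} = S"
    using S unfolding Mid_def Mhom_iff by (force simp: Scomp_Sid_right)
  then show ?thesis using S unfolding Mcomp_def Mhom_iff by (simp add: maxel_antichain_id)
qed

lemma M_assoc:
  assumes S: "S \<in> Mhom m n" and T: "T \<in> Mhom n p" and U: "U \<in> Mhom p q"
  shows "Mcomp (Mcomp S T) U = Mcomp S (Mcomp T U)"
proof -
  have s: "S \<subseteq> Shom m n" "finite S" and t: "T \<subseteq> Shom n p" "finite T" and u: "U \<subseteq> Shom p q" "finite U"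
    using S T U unfolding Mhom_iff by auto
  have "Mcomp (Mcomp S T) U = maxel {Scomp x c | x c. x \<in> {Scomp a b | a b. a \<in> S \<and> b \<in> T} \<and> c \<in> U}"
    unfolding Mcomp_def by (rule Mcomp_left[where m=m and n=p and p=q]) (use s t u in \<open>auto intro: fin2 Scomp_Shom\<close>)
  also have "{Scomp x c | x c. x \<in> {Scomp a b | a b. a \<in> S \<and> b \<in> T} \<and> c \<in> U}
      = {Scomp a y | a y. a \<in> S \<and> y \<in> {Scomp b c | b c. b \<in> T \<and> c \<in> U}}"
    by (rule set3_eq) (use Scomp_assoc s t in blast)
  also have "maxel \<dots> = Mcomp S (Mcomp T U)"
    unfolding Mcomp_def by (rule Mcomp_right[where m=m and n=n and p=q, symmetric]) (use s t u in \<open>auto intro: fin2 Scomp_Shom\<close>)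
  finally show ?thesis .
qed

lemma maxel_single[simp]: "maxel {x} = {x}"
  by (rule maxel_antichain_id) (simp add: antichain_h_def)

lemma set4_eq:
  assumes "\<And>a b c d. a \<in> A \<Longrightarrow> b \<in> B \<Longrightarrow> c \<in> C \<Longrightarrow> d \<in> D \<Longrightarrow> \<phi> (\<psi> a b) (\<psi>' c d) = \<chi> (\<theta> a c) (\<theta>' b d)"
  shows "{\<phi> x y | x y. x \<in> {\<psi> a b | a b. a \<in> A \<and> b \<in> B} \<and> y \<in> {\<psi>' c d | c d. c \<in> C \<and> d \<in> D}}
       = {\<chi> x y | x y. x \<in> {\<theta> a c | a c. a \<in> A \<and> c \<in> C} \<and> y \<in> {\<theta>' b d | b d. b \<in> B \<and> d \<in> D}}"
proof (intro equalityI subsetI)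
  fix z assume "z \<in> {\<phi> x y | x y. x \<in> {\<psi> a b | a b. a \<in> A \<and> b \<in> B} \<and> y \<in> {\<psi>' c d | c d. c \<in> C \<and> d \<in> D}}"
  then obtain a b c d where abc: "a \<in> A" "b \<in> B" "c \<in> C" "d \<in> D" "z = \<phi> (\<psi> a b) (\<psi>' c d)" by blast
  then have "z = \<chi> (\<theta> a c) (\<theta>' b d)" using assms by simp
  then show "z \<in> {\<chi> x y | x y. x \<in> {\<theta> a c | a c. a \<in> A \<and> c \<in> C} \<and> y \<in> {\<theta>' b d | b d. b \<in> B \<and> d \<in> D}}" using abc by blast
next
  fix z assume "z \<in> {\<chi> x y | x y. x \<in> {\<theta> a c | a c. a \<in> A \<and> c \<in> C} \<and> y \<in> {\<theta>' b d | b d. b \<in> B \<and> d \<in> D}}"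
  then obtain a b c d where abc: "a \<in> A" "b \<in> B" "c \<in> C" "d \<in> D" "z = \<chi> (\<theta> a c) (\<theta>' b d)" by blast
  then have "z = \<phi> (\<psi> a b) (\<psi>' c d)" using assms by simp
  then show "z \<in> {\<phi> x y | x y. x \<in> {\<psi> a b | a b. a \<in> A \<and> b \<in> B} \<and> y \<in> {\<psi>' c d | c d. c \<in> C \<and> d \<in> D}}" using abc by blast
qed

lemma M_tens_closed: "F \<in> Mhom m n \<Longrightarrow> G \<in> Mhom m' n' \<Longrightarrow> Mtens m n m' n' F G \<in> Mhom (m + m') (n + n')"
  unfolding Mtens_def Mhom_iff
  by (intro maxel_Mhom[unfolded Mhom_iff] fin2 ne2 Stens_sub) auto

lemma M_tens_id: "Mtens m m m' m' (Mid m) (Mid m') = Mid (m + m')"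
proof -
  have "{Stens m f g | f g. f \<in> Mid m \<and> g \<in> Mid m'} = {Sid (m + m')}"
    unfolding Mid_def using Stens_Sid by auto
  then show ?thesis unfolding Mtens_def Mid_def by simp
qed

lemma M_interchange:
  assumes F: "F \<in> Mhom m n" and G: "G \<in> Mhom n p" and F': "F' \<in> Mhom m' n'" and G': "G' \<in> Mhom n' p'"
  shows "Mtens m p m' p' (Mcomp F G) (Mcomp F' G') = Mcomp (Mtens m n m' n' F F') (Mtens n p n' p' G G')"
proof -
  have f: "F \<subseteq> Shom m n" "finite F" and g: "G \<subseteq> Shom n p" "finite G"
    and f': "F' \<subseteq> Shom m' n'" "finite F'" and g': "G' \<subseteq> Shom n' p'" "finite G'"
    using F G F' G' unfolding Mhom_iff by auto
  define FG where "FG = {Scomp a b | a b. a \<in> F \<and> b \<in> G}"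
  define FG' where "FG' = {Scomp a b | a b. a \<in> F' \<and> b \<in> G'}"
  define FF where "FF = {Stens n a b | a b. a \<in> F \<and> b \<in> F'}"
  define GG where "GG = {Stens p a b | a b. a \<in> G \<and> b \<in> G'}"
  have fin: "finite FG" "finite FG'" "finite FF" "finite GG" unfolding FG_def FG'_def FF_def GG_def
    using f g f' g' by (auto intro: fin2)
  have sub: "FF \<subseteq> Shom (m + m') (n + n')" "GG \<subseteq> Shom (n + n') (p + p')"
    unfolding FF_def GG_def using f g f' g' by (auto intro: Stens_Shom)
  have "Mtens m p m' p' (Mcomp F G) (Mcomp F' G') = maxel {Stens p a b | a b. a \<in> maxel FG \<and> b \<in> maxel FG'}"
    unfolding Mtens_def Mcomp_def FG_def FG'_def ..
  also have "\<dots> = maxel {Stens p a b | a b. a \<in> FG \<and> b \<in> maxel FG'}"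
    using fin by (intro Mtens_left) (auto intro: maxel_finite)
  also have "\<dots> = maxel {Stens p a b | a b. a \<in> FG \<and> b \<in> FG'}"
    using fin by (intro Mtens_right) auto
  also have "{Stens p a b | a b. a \<in> FG \<and> b \<in> FG'} = {Scomp a b | a b. a \<in> FF \<and> b \<in> GG}"
    unfolding FG_def FG'_def FF_def GG_def
    by (rule set4_eq) (use Stens_interchange f g f' g' in blast)
  also have "maxel \<dots> = maxel {Scomp a b | a b. a \<in> FF \<and> b \<in> maxel GG}"
    using fin sub maxel_sub by (intro Mcomp_right[symmetric, where m="m + m'" and n="n + n'" and p="p + p'"]) auto
  also have "\<dots> = maxel {Scomp a b | a b. a \<in> maxel FF \<and> b \<in> maxel GG}"
    using fin sub maxel_sub by (intro Mcomp_left[symmetric, where m="m + m'" and n="n + n'" and p="p + p'"]) (auto intro: maxel_finite)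
  also have "\<dots> = Mcomp (Mtens m n m' n' F F') (Mtens n p n' p' G G')"
    unfolding Mtens_def Mcomp_def FF_def GG_def ..
  finally show ?thesis .
qed

lemma M_tens_assoc:
  assumes F: "F \<in> Mhom m n" and G: "G \<in> Mhom m' n'" and H: "H \<in> Mhom m'' n''"
  shows "Mtens (m + m') (n + n') m'' n'' (Mtens m n m' n' F G) H = Mtens m n (m' + m'') (n' + n'') F (Mtens m' n' m'' n'' G H)"
proof -
  have f: "finite F" and g: "finite G" and h: "finite H" using F G H unfolding Mhom_iff by auto
  have "Mtens (m + m') (n + n') m'' n'' (Mtens m n m' n' F G) H
      = maxel {Stens (n + n') x c | x c. x \<in> {Stens n a b | a b. a \<in> F \<and> b \<in> G} \<and> c \<in> H}"
    unfolding Mtens_def using f g h by (intro Mtens_left fin2)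
  also have "{Stens (n + n') x c | x c. x \<in> {Stens n a b | a b. a \<in> F \<and> b \<in> G} \<and> c \<in> H}
     = {Stens n a y | a y. a \<in> F \<and> y \<in> {Stens n' b c | b c. b \<in> G \<and> c \<in> H}}"
    by (rule set3_eq) (simp add: Stens_assoc)
  also have "maxel \<dots> = Mtens m n (m' + m'') (n' + n'') F (Mtens m' n' m'' n'' G H)"
    unfolding Mtens_def using f g h by (intro Mtens_right[symmetric] fin2)
  finally show ?thesis .
qed

lemma M_tens_unit: "F \<in> Mhom m n \<Longrightarrow> Mtens 0 0 m n (Mid 0) F = F \<and> Mtens m n 0 0 F (Mid 0) = F"
proof -
  assume F: "F \<in> Mhom m n"
  have s0: "Sid 0 = []" by (simp add: Sid_def)
  have "{Stens 0 a b | a b. a \<in> Mid 0 \<and> b \<in> F} = F" unfolding Mid_def s0 by (auto simp: Stens_unit)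
  moreover have "{Stens n a b | a b. a \<in> F \<and> b \<in> Mid 0} = F" unfolding Mid_def s0 by (auto simp: Stens_unit)
  ultimately show ?thesis using F unfolding Mtens_def Mhom_iff by (simp add: maxel_antichain_id)
qed

lemma M_sym_closed: "Msym m n \<in> Mhom (m + n) (n + m)"
  unfolding Msym_def Mhom_iff antichain_h_def using Ssym_Shom by auto

lemma M_sym_nat:
  assumes F: "F \<in> Mhom m n" and G: "G \<in> Mhom m' n'"
  shows "Mcomp (Mtens m n m' n' F G) (Msym n n') = Mcomp (Msym m m') (Mtens m' n' m n G F)"
proof -
  have f: "F \<subseteq> Shom m n" "finite F" and g: "G \<subseteq> Shom m' n'" "finite G" using F G unfolding Mhom_iff by auto
  define FG where "FG = {Stens n a b | a b. a \<in> F \<and> b \<in> G}"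
  define GF where "GF = {Stens n' a b | a b. a \<in> G \<and> b \<in> F}"
  have fin: "finite FG" "finite GF" unfolding FG_def GF_def using f g by (auto intro: fin2)
  have sub: "FG \<subseteq> Shom (m + m') (n + n')" "GF \<subseteq> Shom (m' + m) (n' + n)"
    unfolding FG_def GF_def using f g by (auto intro: Stens_Shom)
  have "Mcomp (Mtens m n m' n' F G) (Msym n n') = maxel {Scomp a b | a b. a \<in> FG \<and> b \<in> Msym n n'}"
    unfolding Mcomp_def Mtens_def FG_def[symmetric] Msym_def
    using fin sub Ssym_Shom by (intro Mcomp_left[where m="m + m'" and n="n + n'" and p="n' + n"]) auto
  also have "{Scomp a b | a b. a \<in> FG \<and> b \<in> Msym n n'} = {Scomp a b | a b. a \<in> Msym m m' \<and> b \<in> GF}"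
  proof (intro equalityI subsetI)
    fix z assume "z \<in> {Scomp a b | a b. a \<in> FG \<and> b \<in> Msym n n'}"
    then obtain a b where ab: "a \<in> F" "b \<in> G" "z = Scomp (Stens n a b) (Ssym n n')" unfolding FG_def Msym_def by blast
    have "a \<in> Shom m n" "b \<in> Shom m' n'" using ab f g by auto
    then have "z = Scomp (Ssym m m') (Stens n' b a)" using Ssym_natural[of a m n b m' n'] ab(3) by simp
    then show "z \<in> {Scomp a b | a b. a \<in> Msym m m' \<and> b \<in> GF}" unfolding GF_def Msym_def using ab by blast
  next
    fix z assume "z \<in> {Scomp a b | a b. a \<in> Msym m m' \<and> b \<in> GF}"
    then obtain a b where ab: "a \<in> F" "b \<in> G" "z = Scomp (Ssym m m') (Stens n' b a)" unfolding GF_def Msym_def by blast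
    have "a \<in> Shom m n" "b \<in> Shom m' n'" using ab f g by auto
    then have "z = Scomp (Stens n a b) (Ssym n n')" using Ssym_natural[of a m n b m' n'] ab(3) by simp
    then show "z \<in> {Scomp a b | a b. a \<in> FG \<and> b \<in> Msym n n'}" unfolding FG_def Msym_def using ab by blast
  qed
  also have "maxel \<dots> = Mcomp (Msym m m') (Mtens m' n' m n G F)"
    unfolding Mcomp_def Mtens_def GF_def[symmetric] Msym_def
    using fin sub Ssym_Shom by (intro Mcomp_right[symmetric, where m="m + m'" and n="m' + m" and p="n' + n"]) auto
  finally show ?thesis .
qed

lemma M_sym_inv: "Mcomp (Msym m n) (Msym n m) = Mid (m + n)"
proof -
  have "{Scomp a b | a b. a \<in> Msym m n \<and> b \<in> Msym n m} = {Sid (m + n)}"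
    unfolding Msym_def using Ssym_inv by auto
  then show ?thesis unfolding Mcomp_def Mid_def by simp
qed

lemma M_hex: "Msym m (n + p) = Mcomp (Mtens (m + n) (n + m) p p (Msym m n) (Mid p)) (Mtens n n (m + p) (p + m) (Mid n) (Msym m p))"
proof -
  have a: "{Stens (n + m) a b | a b. a \<in> Msym m n \<and> b \<in> Mid p} = {Stens (n + m) (Ssym m n) (Sid p)}"
    unfolding Msym_def Mid_def by auto
  have b: "{Stens n a b | a b. a \<in> Mid n \<and> b \<in> Msym m p} = {Stens n (Sid n) (Ssym m p)}"
    unfolding Msym_def Mid_def by auto
  have c: "{Scomp a b | a b. a \<in> {Stens (n + m) (Ssym m n) (Sid p)} \<and> b \<in> {Stens n (Sid n) (Ssym m p)}}
     = {Ssym m (n + p)}" using Ssym_hex by auto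
  show ?thesis unfolding Mcomp_def Mtens_def a b maxel_single c by (simp add: Msym_def)
qed

lemma M_tr_closed: "F \<in> Mhom (l + m) (l + n) \<Longrightarrow> Mtr l m n F \<in> Mhom m n"
  unfolding Mtr_def Mhom_iff
  by (intro maxel_Mhom[unfolded Mhom_iff]) (auto intro: Str_Shom)

lemma Mtr_img: "F \<subseteq> Shom (l + m) (l + n) \<Longrightarrow> finite F \<Longrightarrow> maxel (Str l ` maxel F) = maxel (Str l ` F)"
  by (rule maxel_image_maxel) (auto intro: Str_mono)

lemma M_van0: "F \<in> Mhom m n \<Longrightarrow> Mtr 0 m n F = F"
proof -
  assume F: "F \<in> Mhom m n"
  then have "Str 0 ` F = F" unfolding Mhom_iff using Str0 by force
  then show ?thesis using F unfolding Mtr_def Mhom_iff by (simp add: maxel_antichain_id)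
qed

lemma M_van2:
  assumes F: "F \<in> Mhom (l + l' + m) (l + l' + n)"
  shows "Mtr (l + l') m n F = Mtr l' m n (Mtr l (l' + m) (l' + n) F)"
proof -
  have f: "F \<subseteq> Shom (l + l' + m) (l + l' + n)" "finite F" using F unfolding Mhom_iff by auto
  have f': "F \<subseteq> Shom (l + (l' + m)) (l + (l' + n))" using f by (simp add: add.assoc)
  have sub: "Str l ` F \<subseteq> Shom (l' + m) (l' + n)" using f' Str_Shom by blast
  have "Mtr l' m n (Mtr l (l' + m) (l' + n) F) = maxel (Str l' ` Str l ` F)"
    unfolding Mtr_def using sub f by (intro Mtr_img) auto
  also have "Str l' ` Str l ` F = Str (l + l') ` F"
    using f Str_vanish by (force simp: image_image)
  finally show ?thesis unfolding Mtr_def by simp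
qed

lemma M_super:
  assumes F: "F \<in> Mhom (l + m) (l + n)" and G: "G \<in> Mhom m' n'"
  shows "Mtr l (m + m') (n + n') (Mtens (l + m) (l + n) m' n' F G) = Mtens m n m' n' (Mtr l m n F) G"
proof -
  have f: "F \<subseteq> Shom (l + m) (l + n)" "finite F" and g: "G \<subseteq> Shom m' n'" "finite G"
    using F G unfolding Mhom_iff by auto
  define R where "R = {Stens (l + n) a b | a b. a \<in> F \<and> b \<in> G}"
  have ab: "Stens (l + n) a b \<in> Shom (l + (m + m')) (l + (n + n'))" if "a \<in> F" "b \<in> G" for a b
    using Stens_Shom[of a "l + m" "l + n" b m' n'] that f g by (auto simp: add.assoc)
  have R: "R \<subseteq> Shom (l + (m + m')) (l + (n + n'))" "finite R"
    unfolding R_def using f g ab by (auto intro: fin2)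
  have "Mtr l (m + m') (n + n') (Mtens (l + m) (l + n) m' n' F G) = maxel (Str l ` R)"
    unfolding Mtr_def Mtens_def R_def[symmetric] using R by (rule Mtr_img)
  also have "Str l ` R = {Stens n a b | a b. a \<in> Str l ` F \<and> b \<in> G}"
  proof (intro equalityI subsetI)
    fix z assume "z \<in> Str l ` R"
    then obtain a b where ab: "a \<in> F" "b \<in> G" "z = Str l (Stens (l + n) a b)" unfolding R_def by blast
    then have "z = Stens n (Str l a) b" using Str_super[of a l m n b m' n'] f g by auto
    then show "z \<in> {Stens n a b | a b. a \<in> Str l ` F \<and> b \<in> G}" using ab by blast
  next
    fix z assume "z \<in> {Stens n a b | a b. a \<in> Str l ` F \<and> b \<in> G}"
    then obtain a b where ab: "a \<in> F" "b \<in> G" "z = Stens n (Str l a) b" by blast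
    have "a \<in> Shom (l + m) (l + n)" "b \<in> Shom m' n'" using ab f g by auto
    then have "z = Str l (Stens (l + n) a b)" using Str_super[of a l m n b m' n'] ab(3) by simp
    then show "z \<in> Str l ` R" unfolding R_def using ab by blast
  qed
  also have "maxel \<dots> = Mtens m n m' n' (Mtr l m n F) G"
    unfolding Mtens_def Mtr_def using f g by (intro Mtens_left[symmetric]) auto
  finally show ?thesis .
qed

lemma M_yank: "Mtr l l l (Msym l l) = Mid l"
  unfolding Mtr_def Msym_def Mid_def by (simp add: Str_yank)

lemma M_slide:
  assumes F: "F \<in> Mhom (l + m) (l' + n)" and G: "G \<in> Mhom l' l"
  shows "Mtr l m n (Mcomp F (Mtens l' l n n G (Mid n))) = Mtr l' m n (Mcomp (Mtens l' l m m G (Mid m)) F)"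
proof -
  have f: "F \<subseteq> Shom (l + m) (l' + n)" "finite F" and g: "G \<subseteq> Shom l' l" "finite G"
    using F G unfolding Mhom_iff by auto
  define RA where "RA = {Stens l a b | a b. a \<in> G \<and> b \<in> Mid n}"
  define RB where "RB = {Stens l a b | a b. a \<in> G \<and> b \<in> Mid m}"
  have RA: "RA \<subseteq> Shom (l' + n) (l + n)" "finite RA" unfolding RA_def Mid_def using g Sid_Shom Stens_Shom by (auto intro: fin2)
  have RB: "RB \<subseteq> Shom (l' + m) (l + m)" "finite RB" unfolding RB_def Mid_def using g Sid_Shom Stens_Shom by (auto intro: fin2)
  define R5 where "R5 = {Scomp a b | a b. a \<in> F \<and> b \<in> RA}"
  define R6 where "R6 = {Scomp a b | a b. a \<in> RB \<and> b \<in> F}"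
  have ab: "Scomp a b \<in> Shom (l + m) (l + n)" if "a \<in> F" "b \<in> RA" for a b
    using Scomp_Shom[of a "l + m" "l' + n" b "l + n"] that f RA by auto
  have R5: "R5 \<subseteq> Shom (l + m) (l + n)" "finite R5" unfolding R5_def using f RA ab by (auto intro: fin2)
  have ab6: "Scomp a b \<in> Shom (l' + m) (l' + n)" if "a \<in> RB" "b \<in> F" for a b
    using Scomp_Shom[of a "l' + m" "l + m" b "l' + n"] that f RB by auto
  have R6: "R6 \<subseteq> Shom (l' + m) (l' + n)" "finite R6" unfolding R6_def using f RB ab6 by (auto intro: fin2)
  have "Mcomp F (Mtens l' l n n G (Mid n)) = maxel R5"
    unfolding Mcomp_def Mtens_def RA_def[symmetric] R5_def using f RA by (intro Mcomp_right[where n="l' + n"]) auto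
  then have L: "Mtr l m n (Mcomp F (Mtens l' l n n G (Mid n))) = maxel (Str l ` R5)"
    unfolding Mtr_def using R5 by (simp add: Mtr_img)
  have "Mcomp (Mtens l' l m m G (Mid m)) F = maxel R6"
    unfolding Mcomp_def Mtens_def RB_def[symmetric] R6_def using f RB by (intro Mcomp_left[where n="l + m"]) auto
  then have R: "Mtr l' m n (Mcomp (Mtens l' l m m G (Mid m)) F) = maxel (Str l' ` R6)"
    unfolding Mtr_def using R6 by (simp add: Mtr_img)
  have "Str l ` R5 = Str l' ` R6"
  proof (intro equalityI subsetI)
    fix z assume "z \<in> Str l ` R5"
    then obtain a b where ab: "a \<in> F" "b \<in> G" "z = Str l (Scomp a (Stens l b (Sid n)))" unfolding R5_def RA_def Mid_def by blast
    then have "z = Str l' (Scomp (Stens l b (Sid m)) a)" using Str_slide[of a l m l' n b] f g by auto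
    then show "z \<in> Str l' ` R6" unfolding R6_def RB_def Mid_def using ab by blast
  next
    fix z assume "z \<in> Str l' ` R6"
    then obtain a b where ab: "a \<in> F" "b \<in> G" "z = Str l' (Scomp (Stens l b (Sid m)) a)" unfolding R6_def RB_def Mid_def by blast
    have "a \<in> Shom (l + m) (l' + n)" "b \<in> Shom l' l" using ab f g by auto
    then have "z = Str l (Scomp a (Stens l b (Sid n)))" using Str_slide[of a l m l' n b] ab(3) by simp
    then show "z \<in> Str l ` R5" unfolding R5_def RA_def Mid_def using ab by blast
  qed
  then show ?thesis using L R by simp
qed

lemma M_tight:
  assumes F: "F \<in> Mhom (l + m) (l + n)" and G: "G \<in> Mhom m' m" and H: "H \<in> Mhom n n'"
  shows "Mtr l m' n' (Mcomp (Mcomp (Mtens l l m' m (Mid l) G) F) (Mtens l l n n' (Mid l) H)) = Mcomp (Mcomp G (Mtr l m n F)) H"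
proof -
  have f: "F \<subseteq> Shom (l + m) (l + n)" "finite F" and g: "G \<subseteq> Shom m' m" "finite G" and h: "H \<subseteq> Shom n n'" "finite H"
    using F G H unfolding Mhom_iff by auto
  define RI where "RI = {Stens l a b | a b. a \<in> Mid l \<and> b \<in> G}"
  define RO where "RO = {Stens l a b | a b. a \<in> Mid l \<and> b \<in> H}"
  have RI: "RI \<subseteq> Shom (l + m') (l + m)" "finite RI" unfolding RI_def Mid_def using g Sid_Shom Stens_Shom by (auto intro: fin2)
  have RO: "RO \<subseteq> Shom (l + n) (l + n')" "finite RO" unfolding RO_def Mid_def using h Sid_Shom Stens_Shom by (auto intro: fin2)
  define R2 where "R2 = {Scomp a b | a b. a \<in> RI \<and> b \<in> F}"
  have ab2: "Scomp a b \<in> Shom (l + m') (l + n)" if "a \<in> RI" "b \<in> F" for a b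
    using Scomp_Shom[of a "l + m'" "l + m" b "l + n"] that f RI by auto
  have R2: "R2 \<subseteq> Shom (l + m') (l + n)" "finite R2" unfolding R2_def using RI f ab2 by (auto intro: fin2)
  define R3 where "R3 = {Scomp a b | a b. a \<in> R2 \<and> b \<in> RO}"
  have ab3: "Scomp a b \<in> Shom (l + m') (l + n')" if "a \<in> R2" "b \<in> RO" for a b
    using Scomp_Shom[of a "l + m'" "l + n" b "l + n'"] that R2 RO by auto
  have R3: "R3 \<subseteq> Shom (l + m') (l + n')" "finite R3" unfolding R3_def using R2 RO ab3 by (auto intro: fin2)
  have e1: "Mcomp (Mtens l l m' m (Mid l) G) F = maxel R2"
    unfolding Mcomp_def Mtens_def RI_def[symmetric] R2_def using RI f by (intro Mcomp_left[where n="l + m"]) auto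
  have "Mcomp (maxel R2) (Mtens l l n n' (Mid l) H) = maxel {Scomp a b | a b. a \<in> R2 \<and> b \<in> maxel RO}"
    unfolding Mcomp_def Mtens_def RO_def[symmetric] using R2 RO maxel_sub maxel_finite
    by (intro Mcomp_left[where n="l + n" and p="l + n'"]) auto
  also have "\<dots> = maxel R3"
    unfolding R3_def using R2 RO by (intro Mcomp_right[where n="l + n"]) auto
  finally have e2: "Mcomp (Mcomp (Mtens l l m' m (Mid l) G) F) (Mtens l l n n' (Mid l) H) = maxel R3"
    using e1 by simp
  have L: "Mtr l m' n' (Mcomp (Mcomp (Mtens l l m' m (Mid l) G) F) (Mtens l l n n' (Mid l) H)) = maxel (Str l ` R3)"
    unfolding e2 Mtr_def using R3 by (rule Mtr_img)
  define R4 where "R4 = {Scomp a b | a b. a \<in> G \<and> b \<in> Str l ` F}"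
  have SF: "Str l ` F \<subseteq> Shom m n" using f Str_Shom by blast
  have ab4: "Scomp a b \<in> Shom m' n" if "a \<in> G" "b \<in> Str l ` F" for a b
    using Scomp_Shom[of a m' m b n] that g SF by auto
  have R4: "R4 \<subseteq> Shom m' n" "finite R4" unfolding R4_def using g SF f ab4 by (auto intro: fin2)
  have e3: "Mcomp G (Mtr l m n F) = maxel R4"
    unfolding Mcomp_def Mtr_def R4_def using g SF f by (intro Mcomp_right[where n="m"]) auto
  have R: "Mcomp (Mcomp G (Mtr l m n F)) H = maxel {Scomp a b | a b. a \<in> R4 \<and> b \<in> H}"
  proof -
    have "Mcomp (maxel R4) H = maxel {Scomp a b | a b. a \<in> R4 \<and> b \<in> H}"
      unfolding Mcomp_def using R4 h by (intro Mcomp_left[where n="n"]) auto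
    then show ?thesis using e3 by simp
  qed
  have "Str l ` R3 = {Scomp a b | a b. a \<in> R4 \<and> b \<in> H}"
  proof (intro equalityI subsetI)
    fix z assume "z \<in> Str l ` R3"
    then obtain a b c where abc: "a \<in> G" "b \<in> F" "c \<in> H"
      "z = Str l (Scomp (Scomp (Stens l (Sid l) a) b) (Stens l (Sid l) c))"
      unfolding R3_def R2_def RI_def RO_def Mid_def by blast
    have "b \<in> Shom (l + m) (l + n)" "a \<in> Shom m' m" "c \<in> Shom n n'" using abc f g h by auto
    then have "z = Scomp (Scomp a (Str l b)) c" using Str_tight[of b l m n a m' c n'] abc(4) by simp
    then show "z \<in> {Scomp a b | a b. a \<in> R4 \<and> b \<in> H}" unfolding R4_def using abc by blast
  next
    fix z assume "z \<in> {Scomp a b | a b. a \<in> R4 \<and> b \<in> H}"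
    then obtain a b c where abc: "a \<in> G" "b \<in> F" "c \<in> H" "z = Scomp (Scomp a (Str l b)) c"
      unfolding R4_def by blast
    have "b \<in> Shom (l + m) (l + n)" "a \<in> Shom m' m" "c \<in> Shom n n'" using abc f g h by auto
    then have "z = Str l (Scomp (Scomp (Stens l (Sid l) a) b) (Stens l (Sid l) c))"
      using Str_tight[of b l m n a m' c n'] abc(4) by simp
    then show "z \<in> Str l ` R3" unfolding R3_def R2_def RI_def RO_def Mid_def using abc by blast
  qed
  then show ?thesis using L R by simp
qed

theorem propositionD15:
  shows "traced_smc Mhom Mcomp Mid Mtens Msym Mtr"
proof -
  have c1: "\<forall>m n p f g. f \<in> Mhom m n \<longrightarrow> g \<in> Mhom n p \<longrightarrow> Mcomp f g \<in> Mhom m p"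
    using M_comp_closed by blast
  have c2: "\<forall>m. Mid m \<in> Mhom m m" using M_id_closed by blast
  have c3: "\<forall>m n f. f \<in> Mhom m n \<longrightarrow> Mcomp (Mid m) f = f \<and> Mcomp f (Mid n) = f"
    using M_id_left M_id_right by blast
  have c4: "\<forall>m n p q f g h. f \<in> Mhom m n \<longrightarrow> g \<in> Mhom n p \<longrightarrow> h \<in> Mhom p q \<longrightarrow>
        Mcomp (Mcomp f g) h = Mcomp f (Mcomp g h)" using M_assoc by blast
  have c5: "\<forall>m n m' n' f g. f \<in> Mhom m n \<longrightarrow> g \<in> Mhom m' n' \<longrightarrow>
        Mtens m n m' n' f g \<in> Mhom (m + m') (n + n')" using M_tens_closed by blast
  have c6: "\<forall>m m'. Mtens m m m' m' (Mid m) (Mid m') = Mid (m + m')" using M_tens_id by blast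
  have c7: "\<forall>m n p m' n' p' f g f' g'. f \<in> Mhom m n \<longrightarrow> g \<in> Mhom n p \<longrightarrow>
        f' \<in> Mhom m' n' \<longrightarrow> g' \<in> Mhom n' p' \<longrightarrow>
        Mtens m p m' p' (Mcomp f g) (Mcomp f' g') =
        Mcomp (Mtens m n m' n' f f') (Mtens n p n' p' g g')" using M_interchange by blast
  have c8: "\<forall>m n m' n' m'' n'' f g h. f \<in> Mhom m n \<longrightarrow> g \<in> Mhom m' n' \<longrightarrow> h \<in> Mhom m'' n'' \<longrightarrow>
        Mtens (m + m') (n + n') m'' n'' (Mtens m n m' n' f g) h =
        Mtens m n (m' + m'') (n' + n'') f (Mtens m' n' m'' n'' g h)" using M_tens_assoc by blast
  have c9: "\<forall>m n f. f \<in> Mhom m n \<longrightarrow> Mtens 0 0 m n (Mid 0) f = f \<and> Mtens m n 0 0 f (Mid 0) = f"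
    using M_tens_unit by blast
  have c10: "\<forall>m n. Msym m n \<in> Mhom (m + n) (n + m)" using M_sym_closed by blast
  have c11: "\<forall>m n m' n' f g. f \<in> Mhom m n \<longrightarrow> g \<in> Mhom m' n' \<longrightarrow>
        Mcomp (Mtens m n m' n' f g) (Msym n n') = Mcomp (Msym m m') (Mtens m' n' m n g f)"
    using M_sym_nat by blast
  have c12: "\<forall>m n. Mcomp (Msym m n) (Msym n m) = Mid (m + n)" using M_sym_inv by blast
  have c13: "\<forall>m n p. Msym m (n + p) =
        Mcomp (Mtens (m + n) (n + m) p p (Msym m n) (Mid p)) (Mtens n n (m + p) (p + m) (Mid n) (Msym m p))"
    using M_hex by blast
  have c14: "\<forall>l m n f. f \<in> Mhom (l + m) (l + n) \<longrightarrow> Mtr l m n f \<in> Mhom m n" using M_tr_closed by blast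
  have c15: "\<forall>l m n m' n' f g h. f \<in> Mhom (l + m) (l + n) \<longrightarrow> g \<in> Mhom m' m \<longrightarrow> h \<in> Mhom n n' \<longrightarrow>
        Mtr l m' n' (Mcomp (Mcomp (Mtens l l m' m (Mid l) g) f) (Mtens l l n n' (Mid l) h)) =
        Mcomp (Mcomp g (Mtr l m n f)) h" using M_tight by blast
  have c16: "\<forall>l l' m n f g. f \<in> Mhom (l + m) (l' + n) \<longrightarrow> g \<in> Mhom l' l \<longrightarrow>
        Mtr l m n (Mcomp f (Mtens l' l n n g (Mid n))) = Mtr l' m n (Mcomp (Mtens l' l m m g (Mid m)) f)"
    using M_slide by blast
  have c17: "\<forall>m n f. f \<in> Mhom m n \<longrightarrow> Mtr 0 m n f = f" using M_van0 by blast
  have c18: "\<forall>l l' m n f. f \<in> Mhom (l + l' + m) (l + l' + n) \<longrightarrow>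
        Mtr (l + l') m n f = Mtr l' m n (Mtr l (l' + m) (l' + n) f)" using M_van2 by blast
  have c19: "\<forall>l m n m' n' f g. f \<in> Mhom (l + m) (l + n) \<longrightarrow> g \<in> Mhom m' n' \<longrightarrow>
        Mtr l (m + m') (n + n') (Mtens (l + m) (l + n) m' n' f g) = Mtens m n m' n' (Mtr l m n f) g"
    using M_super by blast
  have c20: "\<forall>l. Mtr l l l (Msym l l) = Mid l" using M_yank by blast
  show ?thesis unfolding traced_smc_def
    using c1 c2 c3 c4 c5 c6 c7 c8 c9 c10 c11 c12 c13 c14 c15 c16 c17 c18 c19 c20 by blast
qed


end
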